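(* Let $O$ be a set of Boolean functions. If $O\preceq\{\land,\top,\bot\}$ or $O\preceq\{\lor,\top,\bot\}$ or $O\preceq\{\neg,\bot\}$, then every $\mathrm{PL}_O$-formula $\phi$ is uniquely characterized with respect to $\mathrm{PL}_O$ by a set of at most $|\phi|_{\mathrm{dag}}+1$ labeled examples. Otherwise, there is no polynomial $p$ such that every $\mathrm{PL}_O$-formula $\phi$ is uniquely characterized with respect to $\mathrm{PL}_O$ by a set of at most $p(|\phi|_{\mathrm{dag}})$ labeled examples.
   Context: A Boolean function is a map $\{0,1\}^n\to\{0,1\}$ with $n\ge 1$; the constants $\top,\bot$ are treated as constant unary Boolean functions; $\land,\lor,\neg$ are the usual Boolean functions. For a set $O$ of Boolean functions, $\langle O\rangle$ is the smallest set of Boolean functions containing $O$ and all projections and closed under composition; $O\preceq O'$ means $\langle O\rangle\subseteq\langle O'\rangle$. Fix a countably infinite set of propositional variables. $\mathrm{PL}_O$ is the set of formulas generated by $\phi::=x\mid f(\phi_1,\dots,\phi_n)$ with $x$ a variable and $f\in O$ of arity $n$, with the obvious semantics under truth assignments $V$; two formulas are equivalent if they agree under every truth assignment. $|\phi|_{\mathrm{dag}}$ is the number of distinct subformulas of $\phi$. A labeled example is a pair $(V,\mathrm{lab})$ with $V$ a truth assignment and $\mathrm{lab}\in\{0,1\}$; $\phi$ fits it if $\phi$ evaluates to $\mathrm{lab}$ under $V$. A set $E$ of labeled examples uniquely characterizes $\phi$ with respect to $\mathrm{PL}_O$ if $\phi$ fits all of $E$ and every $\mathrm{PL}_O$-formula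 fitting all of $E$ is equivalent to $\phi$. *)

theory Defs
  imports Main "HOL-Computational_Algebra.Polynomial"
begin

text \<open>A Boolean function of arity n is represented as a pair (n, f) with
  f :: bool list => bool, n >= 1, and f canonically False on lists whose
  length is not n (so that equality of representations is extensional).\<close>

type_synonym bfun = "nat \<times> (bool list \<Rightarrow> bool)"

definition bfun_wf :: "bfun \<Rightarrow> bool" where
  "bfun_wf g \<longleftrightarrow> fst g \<ge> 1 \<and> (\<forall>xs. length xs \<noteq> fst g \<longrightarrow> \<not> snd g xs)"

definition bproj :: "nat \<Rightarrow> nat \<Rightarrow> bfun" where
  "bproj n i = (n, \<lambda>xs. length xs = n \<and> xs ! i)"

definition bcomp :: "nat \<Rightarrow> bfun \<Rightarrow> bfun list \<Rightarrow> bfun" where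
  "bcomp n f gs = (n, \<lambda>xs. length xs = n \<and> snd f (map (\<lambda>g. snd g xs) gs))"

inductive_set clone :: "bfun set \<Rightarrow> bfun set" for Ops where
  base: "g \<in> Ops \<Longrightarrow> g \<in> clone Ops"
| proj: "1 \<le> n \<Longrightarrow> i < n \<Longrightarrow> bproj n i \<in> clone Ops"
| comp: "f \<in> clone Ops \<Longrightarrow> length gs = fst f \<Longrightarrow> 1 \<le> n \<Longrightarrow>
         (\<forall>g\<in>set gs. g \<in> clone Ops \<and> fst g = n) \<Longrightarrow> bcomp n f gs \<in> clone Ops"

definition clone_le :: "bfun set \<Rightarrow> bfun set \<Rightarrow> bool" (infix "\<preceq>\<^sub>c" 50) where
  "Ops \<preceq>\<^sub>c Ops' \<longleftrightarrow> clone Ops \<subseteq> clone Ops'"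

definition band :: bfun where "band = (2, \<lambda>xs. length xs = 2 \<and> xs ! 0 \<and> xs ! 1)"
definition bor :: bfun where "bor = (2, \<lambda>xs. length xs = 2 \<and> (xs ! 0 \<or> xs ! 1))"
definition bneg :: bfun where "bneg = (1, \<lambda>xs. length xs = 1 \<and> \<not> xs ! 0)"
definition btop :: bfun where "btop = (1, \<lambda>xs. length xs = 1)"
definition bbot :: bfun where "bbot = (1, \<lambda>xs. False)"

datatype form = Var nat | App bfun "form list"

fun in_PL :: "bfun set \<Rightarrow> form \<Rightarrow> bool" where
  "in_PL Ops (Var x) = True"
| "in_PL Ops (App f args) = (f \<in> Ops \<and> length args = fst f \<and> (\<forall>a\<in>set args. in_PL Ops a))"

fun eval :: "(nat \<Rightarrow> bool) \<Rightarrow> form \<Rightarrow> bool" where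
  "eval V (Var x) = V x"
| "eval V (App f args) = snd f (map (eval V) args)"

definition equiv_form :: "form \<Rightarrow> form \<Rightarrow> bool" where
  "equiv_form \<phi> \<psi> \<longleftrightarrow> (\<forall>V. eval V \<phi> = eval V \<psi>)"

fun subforms :: "form \<Rightarrow> form set" where
  "subforms (Var x) = {Var x}"
| "subforms (App f args) = insert (App f args) (\<Union>a\<in>set args. subforms a)"

definition dag_size :: "form \<Rightarrow> nat" where
  "dag_size \<phi> = card (subforms \<phi>)"

type_synonym example = "(nat \<Rightarrow> bool) \<times> bool"

definition fits :: "form \<Rightarrow> example \<Rightarrow> bool" where
  "fits \<phi> e \<longleftrightarrow> eval (fst e) \<phi> = snd e"

definition uniquely_characterizes :: "bfun set \<Rightarrow> example set \<Rightarrow> form \<Rightarrow> bool" where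
  "uniquely_characterizes Ops E \<phi> \<longleftrightarrow>
     (\<forall>e\<in>E. fits \<phi> e) \<and> (\<forall>\<psi>. in_PL Ops \<psi> \<and> (\<forall>e\<in>E. fits \<psi> e) \<longrightarrow> equiv_form \<psi> \<phi>)"

end

theory Submission
  imports Defs
begin


fun vars :: "form \<Rightarrow> nat set" where
  "vars (Var x) = {x}"
| "vars (App f args) = (\<Union>a\<in>set args. vars a)"

fun subst :: "(nat \<Rightarrow> form) \<Rightarrow> form \<Rightarrow> form" where
  "subst \<sigma> (Var x) = \<sigma> x"
| "subst \<sigma> (App f args) = App f (map (subst \<sigma>) args)"

lemma eval_subst: "eval V (subst \<sigma> \<phi>) = eval (\<lambda>v. eval V (\<sigma> v)) \<phi>"
  by (induction \<phi>) (auto simp: o_def cong: map_cong)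

lemma in_PL_subst: "in_PL Ops \<phi> \<Longrightarrow> (\<And>v. in_PL Ops (\<sigma> v)) \<Longrightarrow> in_PL Ops (subst \<sigma> \<phi>)"
  by (induction \<phi>) auto

lemma eval_cong: "(\<And>x. x \<in> vars \<phi> \<Longrightarrow> V x = W x) \<Longrightarrow> eval V \<phi> = eval W \<phi>"
proof (induction \<phi>)
  case (Var x) thus ?case by simp
next
  case (App f args)
  have "\<forall>a\<in>set args. eval V a = eval W a"
    using App by auto
  hence "map (eval V) args = map (eval W) args"
    by (simp add: map_eq_conv)
  thus ?case by (metis eval.simps(2))
qed

lemma finite_vars: "finite (vars \<phi>)"
  by (induction \<phi>) auto

lemma finite_subforms: "finite (subforms \<phi>)"
  by (induction \<phi>) auto

lemma vars_subforms: "Var ` vars \<phi> \<subseteq> subforms \<phi>"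
  by (induction \<phi>) auto

lemma self_subforms: "\<phi> \<in> subforms \<phi>"
  by (cases \<phi>) auto

lemma card_vars_le: "card (vars \<phi>) \<le> dag_size \<phi>"
proof -
  have "card (vars \<phi>) = card (Var ` vars \<phi>)" by (simp add: card_image inj_on_def)
  also have "\<dots> \<le> card (subforms \<phi>)" by (intro card_mono finite_subforms vars_subforms)
  finally show ?thesis unfolding dag_size_def .
qed

lemma dag_pos: "dag_size \<phi> \<ge> 1"
proof -
  have "subforms \<phi> \<noteq> {}" using self_subforms by auto
  thus ?thesis unfolding dag_size_def using finite_subforms
    by (simp add: Suc_le_eq card_gt_0_iff)
qed

lemma subforms_subst:
  "subforms (subst \<sigma> \<phi>) \<subseteq> subst \<sigma> ` subforms \<phi> \<union> (\<Union>v\<in>vars \<phi>. subforms (\<sigma> v))"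
proof (induction \<phi>)
  case (Var x) thus ?case by auto
next
  case (App f args)
  show ?case
  proof
    fix s assume "s \<in> subforms (subst \<sigma> (App f args))"
    then consider "s = App f (map (subst \<sigma>) args)" | a where "a \<in> set args" "s \<in> subforms (subst \<sigma> a)"
      by auto
    thus "s \<in> subst \<sigma> ` subforms (App f args) \<union> (\<Union>v\<in>vars (App f args). subforms (\<sigma> v))"
    proof cases
      case 1 thus ?thesis by (auto intro!: image_eqI[where x="App f args"])
    next
      case 2
      have "subforms a \<subseteq> subforms (App f args)" using 2(1) by auto
      moreover have "vars a \<subseteq> vars (App f args)" using 2(1) by auto
      moreover have "s \<in> subst \<sigma> ` subforms a \<union> (\<Union>v\<in>vars a. subforms (\<sigma> v))"
        using App[OF 2(1)] 2(2) by (rule subsetD)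
      ultimately show ?thesis using 2(1) by auto
    qed
  qed
qed

definition defbl :: "bfun set \<Rightarrow> ((nat \<Rightarrow> bool) \<Rightarrow> bool) \<Rightarrow> bool" where
  "defbl Ops F \<longleftrightarrow> (\<exists>\<psi>. in_PL Ops \<psi> \<and> (\<forall>V. eval V \<psi> = F V))"

lemma defbl_var: "defbl Ops (\<lambda>V. V x)"
  unfolding defbl_def by (intro exI[of _ "Var x"]) auto

lemma defbl_subst:
  assumes "defbl Ops F" "\<And>v. defbl Ops (G v)"
  shows "defbl Ops (\<lambda>V. F (\<lambda>v. G v V))"
proof -
  obtain \<psi> where \<psi>: "in_PL Ops \<psi>" "\<And>V. eval V \<psi> = F V" using assms(1) unfolding defbl_def by auto
  have ex: "\<And>v. \<exists>\<chi>. in_PL Ops \<chi> \<and> (\<forall>V. eval V \<chi> = G v V)" using assms(2) unfolding defbl_def by auto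
  define \<sigma> where "\<sigma> v = (SOME \<chi>. in_PL Ops \<chi> \<and> (\<forall>V. eval V \<chi> = G v V))" for v
  have \<sigma>0: "in_PL Ops (\<sigma> v) \<and> (\<forall>V. eval V (\<sigma> v) = G v V)" for v
    unfolding \<sigma>_def by (rule someI_ex[OF ex])
  hence \<sigma>: "\<And>v. in_PL Ops (\<sigma> v)" "\<And>v V. eval V (\<sigma> v) = G v V" by auto
  show ?thesis unfolding defbl_def
    by (intro exI[of _ "subst \<sigma> \<psi>"]) (simp add: in_PL_subst \<psi> \<sigma> eval_subst)
qed

definition defbl3 :: "bfun set \<Rightarrow> (bool \<Rightarrow> bool \<Rightarrow> bool \<Rightarrow> bool) \<Rightarrow> bool" where
  "defbl3 Ops f \<longleftrightarrow> defbl Ops (\<lambda>V. f (V 0) (V 1) (V 2))"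

lemma defbl3_subst:
  assumes "defbl Ops F" "\<And>v. defbl3 Ops (\<sigma> v)"
  shows "defbl3 Ops (\<lambda>x y z. F (\<lambda>v. \<sigma> v x y z))"
proof -
  have "defbl Ops (\<lambda>V. F (\<lambda>v. \<sigma> v (V 0) (V 1) (V 2)))"
    by (rule defbl_subst[OF assms(1)]) (use assms(2) in \<open>simp add: defbl3_def\<close>)
  thus ?thesis unfolding defbl3_def .
qed

lemma defbl3_comp:
  assumes "defbl3 Ops g" "defbl3 Ops a" "defbl3 Ops b" "defbl3 Ops c"
  shows "defbl3 Ops (\<lambda>x y z. g (a x y z) (b x y z) (c x y z))"
proof -
  define \<sigma> where "\<sigma> = (\<lambda>v::nat. if v = 0 then a else if v = 1 then b else c)"
  have s: "defbl3 Ops (\<sigma> v)" for v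
    using assms(2-4) unfolding \<sigma>_def by (cases "v = 0"; cases "v = 1") simp_all
  have F: "defbl Ops (\<lambda>V. g (V 0) (V 1) (V 2))" using assms(1) unfolding defbl3_def .
  have "defbl3 Ops (\<lambda>x y z. (\<lambda>V. g (V 0) (V 1) (V 2)) (\<lambda>v. \<sigma> v x y z))"
    by (rule defbl3_subst[OF F s])
  moreover have "(\<lambda>x y z. (\<lambda>V. g (V 0) (V 1) (V 2)) (\<lambda>v. \<sigma> v x y z)) = (\<lambda>x y z. g (a x y z) (b x y z) (c x y z))"
    by (simp add: \<sigma>_def)
  ultimately show ?thesis by simp
qed

lemma defbl3_p1: "defbl3 Ops (\<lambda>x y z. x)" unfolding defbl3_def by (rule defbl_var)
lemma defbl3_p2: "defbl3 Ops (\<lambda>x y z. y)" unfolding defbl3_def by (rule defbl_var)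
lemma defbl3_p3: "defbl3 Ops (\<lambda>x y z. z)" unfolding defbl3_def by (rule defbl_var)

lemma defbl3_cong: "defbl3 Ops f \<Longrightarrow> (\<And>x y z. f x y z = g x y z) \<Longrightarrow> defbl3 Ops g"
proof -
  assume "defbl3 Ops f" "\<And>x y z. f x y z = g x y z"
  hence "f = g" by (intro ext) auto
  thus ?thesis using \<open>defbl3 Ops f\<close> by simp
qed


definition andpres :: "((nat \<Rightarrow> bool) \<Rightarrow> bool) \<Rightarrow> bool" where
  "andpres F \<longleftrightarrow> (\<forall>V W. F (\<lambda>v. V v \<and> W v) = (F V \<and> F W))"

definition orpres :: "((nat \<Rightarrow> bool) \<Rightarrow> bool) \<Rightarrow> bool" where
  "orpres F \<longleftrightarrow> (\<forall>V W. F (\<lambda>v. V v \<or> W v) = (F V \<or> F W))"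

definition dep_on :: "nat set \<Rightarrow> ((nat \<Rightarrow> bool) \<Rightarrow> bool) \<Rightarrow> bool" where
  "dep_on X F \<longleftrightarrow> (\<forall>V W. (\<forall>x\<in>X. V x = W x) \<longrightarrow> F V = F W)"

definition eu :: "((nat \<Rightarrow> bool) \<Rightarrow> bool) \<Rightarrow> bool" where
  "eu F \<longleftrightarrow> (\<exists>c. \<forall>V. F V = c) \<or> (\<exists>x b. \<forall>V. F V = (V x = b))"

lemma andpres_mono: "andpres F \<Longrightarrow> F V \<Longrightarrow> (\<And>v. V v \<Longrightarrow> W v) \<Longrightarrow> F W"
proof -
  assume a: "andpres F" "F V" "\<And>v. V v \<Longrightarrow> W v"
  have "(\<lambda>v. W v \<and> V v) = V" using a(3) by auto
  hence "F V = (F W \<and> F V)" using a(1) unfolding andpres_def by metis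
  thus ?thesis using a(2) by simp
qed

lemma andpres_false: "andpres F \<Longrightarrow> \<not> V x \<Longrightarrow> \<not> F (\<lambda>v. v \<noteq> x) \<Longrightarrow> \<not> F V"
proof -
  assume a: "andpres F" "\<not> V x" "\<not> F (\<lambda>v. v \<noteq> x)"
  have "(\<lambda>v. V v \<and> v \<noteq> x) = V" using a(2) by auto
  hence "F V = (F V \<and> F (\<lambda>v. v \<noteq> x))" using a(1) unfolding andpres_def by metis
  thus ?thesis using a(3) by simp
qed

lemma andpres_fin:
  assumes "andpres F" "F (\<lambda>_. True)" "finite A" "\<forall>x\<in>A. F (\<lambda>v. v \<noteq> x)"
  shows "F (\<lambda>v. v \<notin> A)"
  using assms(3,4)
proof (induction A rule: finite_induct)
  case empty thus ?case using assms(2) by simp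
next
  case (insert a A)
  have "(\<lambda>v. v \<notin> insert a A) = (\<lambda>v. v \<noteq> a \<and> v \<notin> A)" by auto
  thus ?case using insert assms(1) unfolding andpres_def by simp
qed

lemma conj_form:
  assumes "andpres F" "dep_on X F" "finite X" "F (\<lambda>_. True)"
  shows "F V = (\<forall>x\<in>{x\<in>X. \<not> F (\<lambda>v. v \<noteq> x)}. V x)"
proof
  assume "F V"
  thus "\<forall>x\<in>{x\<in>X. \<not> F (\<lambda>v. v \<noteq> x)}. V x" using andpres_false[OF assms(1)] by blast
next
  assume h: "\<forall>x\<in>{x\<in>X. \<not> F (\<lambda>v. v \<noteq> x)}. V x"
  define A where "A = {x\<in>X. \<not> V x}"
  have "F (\<lambda>v. v \<notin> A)"
    by (rule andpres_fin[OF assms(1,4)]) (use h assms(3) in \<open>auto simp: A_def\<close>)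
  moreover have "F V = F (\<lambda>v. v \<notin> A)"
    using assms(2) unfolding dep_on_def A_def by auto
  ultimately show "F V" by simp
qed

lemma conj_char:
  assumes "andpres F" "dep_on X F" "finite X"
  shows "\<exists>E. finite E \<and> card E \<le> card X + 1 \<and> (\<forall>e\<in>E. F (fst e) = snd e) \<and>
     (\<forall>G. andpres G \<and> (\<forall>e\<in>E. G (fst e) = snd e) \<longrightarrow> (\<forall>V. G V = F V))"
proof (cases "F (\<lambda>_. True)")
  case False
  show ?thesis
  proof (intro exI[of _ "{((\<lambda>_. True), False)}"] conjI allI impI)
    fix G and V :: "nat \<Rightarrow> bool" assume "andpres G \<and> (\<forall>e\<in>{((\<lambda>_. True), False)}. G (fst e) = snd e)"
    hence "andpres G" "\<not> G (\<lambda>_. True)" by auto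
    thus "G V = F V" using andpres_mono[OF _ _, of G V "\<lambda>_. True"] andpres_mono[OF assms(1), of V "\<lambda>_. True"] False
      by auto
  qed (use False in auto)
next
  case True
  define S where "S = {x\<in>X. \<not> F (\<lambda>v. v \<noteq> x)}"
  have FS: "F V = (\<forall>x\<in>S. V x)" for V unfolding S_def by (rule conj_form[OF assms True])
  have finS: "finite S" using assms(3) unfolding S_def by auto
  define E where "E = insert ((\<lambda>v. v \<in> S), True) ((\<lambda>x. ((\<lambda>v. v \<noteq> x), False)) ` S)"
  show ?thesis
  proof (intro exI[of _ E] conjI allI impI)
    show "finite E" unfolding E_def using finS by auto
    have "card E \<le> Suc (card ((\<lambda>x. ((\<lambda>v. v \<noteq> x), False)) ` S))"
      unfolding E_def using finS by (simp add: card_insert_if)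
    also have "\<dots> \<le> Suc (card S)" using card_image_le[OF finS] by simp
    also have "\<dots> \<le> card X + 1" using card_mono[OF assms(3)] unfolding S_def by auto
    finally show "card E \<le> card X + 1" .
    show "\<forall>e\<in>E. F (fst e) = snd e" unfolding E_def using FS by auto
    fix G and V :: "nat \<Rightarrow> bool" assume "andpres G \<and> (\<forall>e\<in>E. G (fst e) = snd e)"
    hence G: "andpres G" "G (\<lambda>v. v \<in> S)" "\<And>x. x \<in> S \<Longrightarrow> \<not> G (\<lambda>v. v \<noteq> x)" unfolding E_def by auto
    show "G V = F V"
    proof (cases "\<forall>x\<in>S. V x")
      case True
      hence "G V" using andpres_mono[OF G(1,2)] by auto
      thus ?thesis using FS True by simp
    next
      case False
      then obtain x where "x \<in> S" "\<not> V x" by auto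
      hence "\<not> G V" using andpres_false[OF G(1)] G(3) by auto
      thus ?thesis using FS False by simp
    qed
  qed
qed

lemma disj_char:
  assumes "orpres F" "dep_on X F" "finite X"
  shows "\<exists>E. finite E \<and> card E \<le> card X + 1 \<and> (\<forall>e\<in>E. F (fst e) = snd e) \<and>
     (\<forall>G. orpres G \<and> (\<forall>e\<in>E. G (fst e) = snd e) \<longrightarrow> (\<forall>V. G V = F V))"
proof -
  define F' where "F' = (\<lambda>V. \<not> F (\<lambda>v. \<not> V v))"
  have a1: "andpres F'" unfolding andpres_def F'_def
  proof (intro allI)
    fix V W :: "nat \<Rightarrow> bool"
    have "F (\<lambda>v. \<not> V v \<or> \<not> W v) = (F (\<lambda>v. \<not> V v) \<or> F (\<lambda>v. \<not> W v))"
      using assms(1) unfolding orpres_def by (erule_tac x="\<lambda>v. \<not> V v" in allE, erule_tac x="\<lambda>v. \<not> W v" in allE) assumption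
    thus "(\<not> F (\<lambda>v. \<not> (V v \<and> W v))) = ((\<not> F (\<lambda>v. \<not> V v)) \<and> (\<not> F (\<lambda>v. \<not> W v)))" by simp
  qed
  have a2: "dep_on X F'" using assms(2) unfolding dep_on_def F'_def by auto
  obtain E' where E': "finite E'" "card E' \<le> card X + 1" "\<forall>e\<in>E'. F' (fst e) = snd e"
    "\<forall>G. andpres G \<and> (\<forall>e\<in>E'. G (fst e) = snd e) \<longrightarrow> (\<forall>V. G V = F' V)"
    using conj_char[OF a1 a2 assms(3)] by (elim exE conjE) blast
  define fl where "fl = (\<lambda>e::example. ((\<lambda>v. \<not> fst e v), \<not> snd e))"
  show ?thesis
  proof (intro exI[of _ "fl ` E'"] conjI allI impI)
    show "finite (fl ` E')" using E'(1) by simp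
    show "card (fl ` E') \<le> card X + 1" using card_image_le[OF E'(1), of fl] E'(2) by simp
    show "\<forall>e\<in>fl ` E'. F (fst e) = snd e" using E'(3) unfolding fl_def F'_def by auto
    fix G and V :: "nat \<Rightarrow> bool" assume h: "orpres G \<and> (\<forall>e\<in>fl ` E'. G (fst e) = snd e)"
    define G' where "G' = (\<lambda>V. \<not> G (\<lambda>v. \<not> V v))"
    have "andpres G'" unfolding andpres_def G'_def
    proof (intro allI)
      fix V W :: "nat \<Rightarrow> bool"
      have "G (\<lambda>v. \<not> V v \<or> \<not> W v) = (G (\<lambda>v. \<not> V v) \<or> G (\<lambda>v. \<not> W v))"
        using h unfolding orpres_def by (elim conjE, erule_tac x="\<lambda>v. \<not> V v" in allE, erule_tac x="\<lambda>v. \<not> W v" in allE) assumption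
      thus "(\<not> G (\<lambda>v. \<not> (V v \<and> W v))) = ((\<not> G (\<lambda>v. \<not> V v)) \<and> (\<not> G (\<lambda>v. \<not> W v)))" by simp
    qed
    moreover have "\<forall>e\<in>E'. G' (fst e) = snd e" using h unfolding fl_def G'_def by auto
    ultimately have "\<forall>V. G' V = F' V" using spec[OF E'(4), of G'] by simp
    hence "G' (\<lambda>v. \<not> V v) = F' (\<lambda>v. \<not> V v)" by blast
    thus "G V = F V" unfolding G'_def F'_def by simp
  qed
qed

lemma eu_char:
  assumes "eu F"
  shows "\<exists>E. finite E \<and> card E \<le> 2 \<and> (\<forall>e\<in>E. F (fst e) = snd e) \<and>
     (\<forall>G. eu G \<and> (\<forall>e\<in>E. G (fst e) = snd e) \<longrightarrow> (\<forall>V. G V = F V))"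
proof -
  from assms consider (c) c where "\<forall>V. F V = c" | (v) x b where "\<forall>V. F V = (V x = b)"
    unfolding eu_def by metis
  thus ?thesis
  proof cases
    case c
    define E where "E = {((\<lambda>_::nat. False), c), ((\<lambda>_. True), c)}"
    have "finite E" "card E \<le> 2" "\<forall>e\<in>E. F (fst e) = snd e" unfolding E_def using c
      by (auto simp: card_insert_if)
    moreover have key: "\<forall>V. G V = F V" if h: "eu G" "\<forall>e\<in>E. G (fst e) = snd e" for G
    proof -
      from h(1) consider (c') c' where "\<forall>V. G V = c'" | (v') y b' where "\<forall>V. G V = (V y = b')"
        unfolding eu_def by metis
      thus ?thesis
      proof cases
        case c' thus ?thesis using h(2) c unfolding E_def by auto
      next
        case v'
        have "G (\<lambda>_. False) = c" "G (\<lambda>_. True) = c" using h(2) unfolding E_def by auto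
        hence False using v' by auto
        thus ?thesis ..
      qed
    qed
    ultimately show ?thesis
    proof (intro exI[of _ E] conjI allI impI)
      fix G V assume "eu G \<and> (\<forall>e\<in>E. G (fst e) = snd e)"
      thus "G V = F V" using key[of G] by simp
    qed
  next
    case v
    define E where "E = {((\<lambda>v. v = x), (True = b)), ((\<lambda>_. False), (False = b))}"
    have "finite E" "card E \<le> 2" "\<forall>e\<in>E. F (fst e) = snd e" unfolding E_def using v
      by (auto simp: card_insert_if)
    moreover have key: "\<forall>V. G V = F V" if h: "eu G" "\<forall>e\<in>E. G (fst e) = snd e" for G
    proof -
      have e1: "G (\<lambda>v. v = x) = (True = b)" and e2: "G (\<lambda>_. False) = (False = b)"
        using h(2) unfolding E_def by auto
      from h(1) consider (c') c' where "\<forall>V. G V = c'" | (v') y b' where "\<forall>V. G V = (V y = b')"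
        unfolding eu_def by metis
      thus ?thesis
      proof cases
        case c' thus ?thesis using e1 e2 by auto
      next
        case v'
        show ?thesis
        proof (cases "y = x")
          case True thus ?thesis using v' v e1 by auto
        next
          case False thus ?thesis using v' e1 e2 by auto
        qed
      qed
    qed
    ultimately show ?thesis
    proof (intro exI[of _ E] conjI allI impI)
      fix G V assume "eu G \<and> (\<forall>e\<in>E. G (fst e) = snd e)"
      thus "G V = F V" using key[of G] by simp
    qed
  qed
qed


definition landp :: "bfun \<Rightarrow> bool" where
  "landp g \<longleftrightarrow> (\<forall>xs ys. length xs = fst g \<longrightarrow> length ys = fst g \<longrightarrow>
      snd g (map2 (\<and>) xs ys) = (snd g xs \<and> snd g ys))"
definition lorp :: "bfun \<Rightarrow> bool" where
  "lorp g \<longleftrightarrow> (\<forall>xs ys. length xs = fst g \<longrightarrow> length ys = fst g \<longrightarrow>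
      snd g (map2 (\<or>) xs ys) = (snd g xs \<or> snd g ys))"
definition leu :: "bfun \<Rightarrow> bool" where
  "leu g \<longleftrightarrow> (\<exists>c. \<forall>xs. length xs = fst g \<longrightarrow> snd g xs = c) \<or>
     (\<exists>i<fst g. \<exists>b. \<forall>xs. length xs = fst g \<longrightarrow> snd g xs = (xs ! i = b))"

lemma map_conj_map2: "map (\<lambda>a. P a \<and> Q a) xs = map2 (\<and>) (map P xs) (map Q xs)"
  by (induction xs) auto
lemma map_disj_map2: "map (\<lambda>a. P a \<or> Q a) xs = map2 (\<or>) (map P xs) (map Q xs)"
  by (induction xs) auto

lemma clone_E_sound: "g \<in> clone {band, btop, bbot} \<Longrightarrow> landp g"
proof (induction rule: clone.induct)
  case (base g) thus ?case
    by (auto simp: landp_def band_def btop_def bbot_def)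
next
  case (proj n i) thus ?case by (auto simp: landp_def bproj_def)
next
  case (comp f gs n)
  show ?case unfolding landp_def
  proof (intro allI impI)
    fix xs ys :: "bool list" assume l: "length xs = fst (bcomp n f gs)" "length ys = fst (bcomp n f gs)"
    hence ln: "length xs = n" "length ys = n" by (auto simp: bcomp_def)
    have "map (\<lambda>g. snd g (map2 (\<and>) xs ys)) gs = map (\<lambda>g. snd g xs \<and> snd g ys) gs"
      using comp.IH(2) ln unfolding landp_def by (intro map_cong) auto
    also have "\<dots> = map2 (\<and>) (map (\<lambda>g. snd g xs) gs) (map (\<lambda>g. snd g ys) gs)"
      by (rule map_conj_map2)
    finally have "snd f (map (\<lambda>g. snd g (map2 (\<and>) xs ys)) gs) =
        (snd f (map (\<lambda>g. snd g xs) gs) \<and> snd f (map (\<lambda>g. snd g ys) gs))"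
      using comp.IH(1) comp.hyps(2) unfolding landp_def by simp
    thus "snd (bcomp n f gs) (map2 (\<and>) xs ys) = (snd (bcomp n f gs) xs \<and> snd (bcomp n f gs) ys)"
      using ln by (simp add: bcomp_def)
  qed
qed

lemma clone_V_sound: "g \<in> clone {bor, btop, bbot} \<Longrightarrow> lorp g"
proof (induction rule: clone.induct)
  case (base g) thus ?case
    by (auto simp: lorp_def bor_def btop_def bbot_def)
next
  case (proj n i) thus ?case by (auto simp: lorp_def bproj_def)
next
  case (comp f gs n)
  show ?case unfolding lorp_def
  proof (intro allI impI)
    fix xs ys :: "bool list" assume l: "length xs = fst (bcomp n f gs)" "length ys = fst (bcomp n f gs)"
    hence ln: "length xs = n" "length ys = n" by (auto simp: bcomp_def)
    have "map (\<lambda>g. snd g (map2 (\<or>) xs ys)) gs = map (\<lambda>g. snd g xs \<or> snd g ys) gs"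
      using comp.IH(2) ln unfolding lorp_def by (intro map_cong) auto
    also have "\<dots> = map2 (\<or>) (map (\<lambda>g. snd g xs) gs) (map (\<lambda>g. snd g ys) gs)"
      by (rule map_disj_map2)
    finally have "snd f (map (\<lambda>g. snd g (map2 (\<or>) xs ys)) gs) =
        (snd f (map (\<lambda>g. snd g xs) gs) \<or> snd f (map (\<lambda>g. snd g ys) gs))"
      using comp.IH(1) comp.hyps(2) unfolding lorp_def by simp
    thus "snd (bcomp n f gs) (map2 (\<or>) xs ys) = (snd (bcomp n f gs) xs \<or> snd (bcomp n f gs) ys)"
      using ln by (simp add: bcomp_def)
  qed
qed

lemma clone_N_sound: "g \<in> clone {bneg, bbot} \<Longrightarrow> leu g"
proof (induction rule: clone.induct)
  case (base g)
  thus ?case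
  proof
    assume "g = bneg" thus ?case unfolding leu_def bneg_def
      by (intro disjI2 exI[of _ 0]) (auto intro!: exI[of _ False])
  next
    assume "g \<in> {bbot}" thus ?case unfolding leu_def bbot_def by auto
  qed
next
  case (proj n i) thus ?case unfolding leu_def bproj_def
    by (intro disjI2 exI[of _ i]) (auto intro!: exI[of _ True])
next
  case (comp f gs n)
  from comp.IH(1) show ?case unfolding leu_def
  proof (elim disjE exE conjE)
    fix c assume "\<forall>xs. length xs = fst f \<longrightarrow> snd f xs = c"
    thus "(\<exists>c. \<forall>xs. length xs = fst (bcomp n f gs) \<longrightarrow> snd (bcomp n f gs) xs = c) \<or>
      (\<exists>i<fst (bcomp n f gs). \<exists>b. \<forall>xs. length xs = fst (bcomp n f gs) \<longrightarrow> snd (bcomp n f gs) xs = (xs ! i = b))"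
      using comp.hyps(2) by (intro disjI1 exI[of _ c]) (auto simp: bcomp_def)
  next
    fix i b assume i: "i < fst f" and fi: "\<forall>xs. length xs = fst f \<longrightarrow> snd f xs = (xs ! i = b)"
    have gi: "gs ! i \<in> set gs" using i comp.hyps(2) by simp
    have red: "snd (bcomp n f gs) xs = (length xs = n \<and> (snd (gs ! i) xs = b))" for xs
      using fi i comp.hyps(2) by (simp add: bcomp_def)
    have fgi: "fst (gs ! i) = n" and lg: "leu (gs ! i)" using comp.IH(2) gi by auto
    from lg show "(\<exists>c. \<forall>xs. length xs = fst (bcomp n f gs) \<longrightarrow> snd (bcomp n f gs) xs = c) \<or>
      (\<exists>i<fst (bcomp n f gs). \<exists>b. \<forall>xs. length xs = fst (bcomp n f gs) \<longrightarrow> snd (bcomp n f gs) xs = (xs ! i = b))"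
      unfolding leu_def
    proof (elim disjE exE conjE)
      fix c assume "\<forall>xs. length xs = fst (gs ! i) \<longrightarrow> snd (gs ! i) xs = c"
      thus ?thesis using red fgi by (intro disjI1 exI[of _ "c = b"]) (auto simp: bcomp_def)
    next
      fix j b' assume j: "j < fst (gs ! i)" "\<forall>xs. length xs = fst (gs ! i) \<longrightarrow> snd (gs ! i) xs = (xs ! j = b')"
      thus ?thesis using red fgi by (intro disjI2 exI[of _ j]) (auto simp: bcomp_def intro!: exI[of _ "b' = b"])
    qed
  qed
qed

lemma lift_andpres: "(\<forall>f\<in>Ops. landp f) \<Longrightarrow> in_PL Ops \<phi> \<Longrightarrow> andpres (\<lambda>V. eval V \<phi>)"
proof (induction \<phi>)
  case (Var x) thus ?case by (simp add: andpres_def)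
next
  case (App f args)
  have IH: "\<forall>a\<in>set args. andpres (\<lambda>V. eval V a)" using App by auto
  have lf: "landp f" "length args = fst f" using App.prems by auto
  show ?case unfolding andpres_def
  proof (intro allI)
    fix V W :: "nat \<Rightarrow> bool"
    have "map (eval (\<lambda>v. V v \<and> W v)) args = map (\<lambda>a. eval V a \<and> eval W a) args"
      using IH unfolding andpres_def by (intro map_cong) auto
    also have "\<dots> = map2 (\<and>) (map (eval V) args) (map (eval W) args)" by (rule map_conj_map2)
    finally show "eval (\<lambda>v. V v \<and> W v) (App f args) = (eval V (App f args) \<and> eval W (App f args))"
      using lf unfolding landp_def by simp
  qed
qed

lemma lift_orpres: "(\<forall>f\<in>Ops. lorp f) \<Longrightarrow> in_PL Ops \<phi> \<Longrightarrow> orpres (\<lambda>V. eval V \<phi>)"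
proof (induction \<phi>)
  case (Var x) thus ?case by (simp add: orpres_def)
next
  case (App f args)
  have IH: "\<forall>a\<in>set args. orpres (\<lambda>V. eval V a)" using App by auto
  have lf: "lorp f" "length args = fst f" using App.prems by auto
  show ?case unfolding orpres_def
  proof (intro allI)
    fix V W :: "nat \<Rightarrow> bool"
    have "map (eval (\<lambda>v. V v \<or> W v)) args = map (\<lambda>a. eval V a \<or> eval W a) args"
      using IH unfolding orpres_def by (intro map_cong) auto
    also have "\<dots> = map2 (\<or>) (map (eval V) args) (map (eval W) args)" by (rule map_disj_map2)
    finally show "eval (\<lambda>v. V v \<or> W v) (App f args) = (eval V (App f args) \<or> eval W (App f args))"
      using lf unfolding lorp_def by simp
  qed
qed

lemma lift_eu: "(\<forall>f\<in>Ops. leu f) \<Longrightarrow> in_PL Ops \<phi> \<Longrightarrow> eu (\<lambda>V. eval V \<phi>)"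
proof (induction \<phi>)
  case (Var x) thus ?case unfolding eu_def by (intro disjI2 exI[of _ x] exI[of _ True]) simp
next
  case (App f args)
  have lf: "leu f" "length args = fst f" using App.prems by auto
  from lf(1) show ?case unfolding leu_def
  proof (elim disjE exE conjE)
    fix c assume "\<forall>xs. length xs = fst f \<longrightarrow> snd f xs = c"
    thus ?thesis using lf(2) unfolding eu_def by (intro disjI1 exI[of _ c]) simp
  next
    fix i b assume i: "i < fst f" "\<forall>xs. length xs = fst f \<longrightarrow> snd f xs = (xs ! i = b)"
    have ai: "args ! i \<in> set args" using i lf(2) by simp
    hence "eu (\<lambda>V. eval V (args ! i))" using App by auto
    moreover have red: "eval V (App f args) = (eval V (args ! i) = b)" for V
      using i lf(2) by simp
    ultimately show ?thesis unfolding eu_def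
    proof (elim disjE exE)
      fix c assume "\<forall>V. eval V (args ! i) = c"
      thus "(\<exists>c. \<forall>V. eval V (App f args) = c) \<or> (\<exists>x b. \<forall>V. eval V (App f args) = (V x = b))"
        using red by (intro disjI1 exI[of _ "c = b"]) simp
    next
      fix x b' assume "\<forall>V. eval V (args ! i) = (V x = b')"
      thus "(\<exists>c. \<forall>V. eval V (App f args) = c) \<or> (\<exists>x b. \<forall>V. eval V (App f args) = (V x = b))"
        using red by (intro disjI2 exI[of _ x] exI[of _ "b' = b"]) auto
    qed
  qed
qed

lemma dep_on_vars: "dep_on (vars \<phi>) (\<lambda>V. eval V \<phi>)"
  unfolding dep_on_def using eval_cong by blast

lemma clone_sub: "(\<forall>f\<in>Ops. f \<in> clone X) \<Longrightarrow> g \<in> clone Ops \<Longrightarrow> g \<in> clone X"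
proof -
  assume h: "\<forall>f\<in>Ops. f \<in> clone X"
  show "g \<in> clone Ops \<Longrightarrow> g \<in> clone X"
  proof (induction rule: clone.induct)
    case (base g) thus ?case using h by auto
  next
    case (proj n i) thus ?case by (rule clone.proj)
  next
    case (comp f gs n) thus ?case by (intro clone.comp) auto
  qed
qed


lemma bfun_eqI:
  assumes "bfun_wf f" "fst h = fst f" "\<And>xs. length xs = fst f \<Longrightarrow> snd f xs = snd h xs"
    "\<And>xs. length xs \<noteq> fst f \<Longrightarrow> \<not> snd h xs"
  shows "f = h"
proof (rule prod_eqI)
  show "fst f = fst h" using assms(2) by simp
  show "snd f = snd h"
  proof
    fix xs show "snd f xs = snd h xs"
      using assms unfolding bfun_wf_def by (cases "length xs = fst f") auto
  qed
qed

lemma map_nth_upt: "map (\<lambda>i. xs ! i) [0..<length xs] = xs"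
  by (simp add: map_nth)

lemma comp1I: "f \<in> clone Ops \<Longrightarrow> fst f = 1 \<Longrightarrow> 1 \<le> n \<Longrightarrow> g \<in> clone Ops \<Longrightarrow> fst g = n \<Longrightarrow>
   bcomp n f [g] \<in> clone Ops"
  by (rule clone.comp) auto

lemma comp2I: "f \<in> clone Ops \<Longrightarrow> fst f = 2 \<Longrightarrow> 1 \<le> n \<Longrightarrow> g \<in> clone Ops \<Longrightarrow> fst g = n \<Longrightarrow>
   h \<in> clone Ops \<Longrightarrow> fst h = n \<Longrightarrow> bcomp n f [g, h] \<in> clone Ops"
  by (rule clone.comp) auto

lemma fst_bproj[simp]: "fst (bproj n i) = n" by (simp add: bproj_def)
lemma fst_bcomp[simp]: "fst (bcomp n f gs) = n" by (simp add: bcomp_def)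

fun conjl :: "nat \<Rightarrow> nat list \<Rightarrow> bfun" where
  "conjl n [] = bcomp n btop [bproj n 0]"
| "conjl n (i # js) = bcomp n band [bproj n i, conjl n js]"

fun disjl :: "nat \<Rightarrow> nat list \<Rightarrow> bfun" where
  "disjl n [] = bcomp n bbot [bproj n 0]"
| "disjl n (i # js) = bcomp n bor [bproj n i, disjl n js]"

lemma conjl_props:
  assumes "1 \<le> n" "set js \<subseteq> {..<n}"
  shows "conjl n js \<in> clone {band, btop, bbot} \<and> fst (conjl n js) = n \<and>
         snd (conjl n js) = (\<lambda>xs. length xs = n \<and> (\<forall>i\<in>set js. xs ! i))"
  using assms(2)
proof (induction js)
  case Nil
  have "conjl n [] \<in> clone {band, btop, bbot}"
    using assms(1) by (auto intro!: comp1I intro: clone.base clone.proj simp: btop_def)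
  thus ?case by (auto simp: bcomp_def btop_def bproj_def)
next
  case (Cons i js)
  have IH: "conjl n js \<in> clone {band, btop, bbot}" "fst (conjl n js) = n"
      "snd (conjl n js) = (\<lambda>xs. length xs = n \<and> (\<forall>i\<in>set js. xs ! i))" using Cons by auto
  have i: "i < n" using Cons.prems by auto
  have "conjl n (i # js) \<in> clone {band, btop, bbot}"
    using assms(1) i IH(1,2) by (auto intro!: comp2I intro: clone.base clone.proj simp: band_def)
  thus ?case using IH by (auto simp: bcomp_def band_def bproj_def)
qed

lemma disjl_props:
  assumes "1 \<le> n" "set js \<subseteq> {..<n}"
  shows "disjl n js \<in> clone {bor, btop, bbot} \<and> fst (disjl n js) = n \<and>
         snd (disjl n js) = (\<lambda>xs. length xs = n \<and> (\<exists>i\<in>set js. xs ! i))"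
  using assms(2)
proof (induction js)
  case Nil
  have "disjl n [] \<in> clone {bor, btop, bbot}"
    using assms(1) by (auto intro!: comp1I intro: clone.base clone.proj simp: bbot_def)
  thus ?case by (auto simp: bcomp_def bbot_def bproj_def)
next
  case (Cons i js)
  have IH: "disjl n js \<in> clone {bor, btop, bbot}" "fst (disjl n js) = n"
      "snd (disjl n js) = (\<lambda>xs. length xs = n \<and> (\<exists>i\<in>set js. xs ! i))" using Cons by auto
  have i: "i < n" using Cons.prems by auto
  have "disjl n (i # js) \<in> clone {bor, btop, bbot}"
    using assms(1) i IH(1,2) by (auto intro!: comp2I intro: clone.base clone.proj simp: bor_def)
  thus ?case using IH by (auto simp: bcomp_def bor_def bproj_def)
qed

lemma E_complete:
  assumes wf: "bfun_wf f" and lf: "landp f"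
  shows "f \<in> clone {band, btop, bbot}"
proof -
  define n where "n = fst f"
  have n1: "1 \<le> n" using wf unfolding bfun_wf_def n_def by simp
  define F where "F = (\<lambda>V. snd f (map V [0..<n]))"
  have Fxs: "snd f xs = F (\<lambda>i. xs ! i)" if "length xs = n" for xs
    unfolding F_def using that map_nth_upt[of xs] by simp
  have ap: "andpres F" unfolding andpres_def F_def
  proof (intro allI)
    fix V W :: "nat \<Rightarrow> bool"
    show "snd f (map (\<lambda>v. V v \<and> W v) [0..<n]) = (snd f (map V [0..<n]) \<and> snd f (map W [0..<n]))"
      using lf unfolding landp_def n_def by (simp add: map_conj_map2)
  qed
  have dp: "dep_on {..<n} F" unfolding dep_on_def F_def
  proof (intro allI impI)
    fix V W :: "nat \<Rightarrow> bool" assume "\<forall>x\<in>{..<n}. V x = W x"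
    hence "map V [0..<n] = map W [0..<n]" by (simp add: map_eq_conv)
    thus "snd f (map V [0..<n]) = snd f (map W [0..<n])" by (simp only:)
  qed
  show ?thesis
  proof (cases "F (\<lambda>_. True)")
    case False
    have "f = bcomp n bbot [bproj n 0]"
    proof (rule bfun_eqI[OF wf])
      show "fst (bcomp n bbot [bproj n 0]) = fst f" by (simp add: bcomp_def n_def)
      fix xs :: "bool list"
      show "length xs \<noteq> fst f \<Longrightarrow> \<not> snd (bcomp n bbot [bproj n 0]) xs" by (simp add: bcomp_def bbot_def)
      assume "length xs = fst f"
      hence "snd f xs = F (\<lambda>i. xs ! i)" using Fxs n_def by simp
      moreover have "\<not> F (\<lambda>i. xs ! i)" using andpres_mono[OF ap, of "\<lambda>i. xs ! i" "\<lambda>_. True"] False by auto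
      ultimately show "snd f xs = snd (bcomp n bbot [bproj n 0]) xs" by (simp add: bcomp_def bbot_def)
    qed
    moreover have "bcomp n bbot [bproj n 0] \<in> clone {band, btop, bbot}"
      using n1 by (auto intro!: comp1I intro: clone.base clone.proj simp: bbot_def)
    ultimately show ?thesis by simp
  next
    case True
    define S where "S = {x\<in>{..<n}. \<not> F (\<lambda>v. v \<noteq> x)}"
    have FS: "F V = (\<forall>x\<in>S. V x)" for V unfolding S_def by (rule conj_form[OF ap dp _ True]) simp
    have finS: "finite S" "S \<subseteq> {..<n}" unfolding S_def by auto
    define js where "js = sorted_list_of_set S"
    have sis: "set js = S" unfolding js_def using finS by simp
    note cp = conjl_props[OF n1, of js]
    have "f = conjl n js"
    proof (rule bfun_eqI[OF wf])
      show "fst (conjl n js) = fst f" using cp sis finS by (simp add: n_def)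
      fix xs :: "bool list"
      show "length xs \<noteq> fst f \<Longrightarrow> \<not> snd (conjl n js) xs" using cp sis finS by (simp add: n_def)
      assume "length xs = fst f"
      thus "snd f xs = snd (conjl n js) xs" using cp sis finS Fxs FS by (simp add: n_def)
    qed
    thus ?thesis using cp sis finS by simp
  qed
qed

lemma V_complete:
  assumes wf: "bfun_wf f" and lf: "lorp f"
  shows "f \<in> clone {bor, btop, bbot}"
proof -
  define n where "n = fst f"
  have n1: "1 \<le> n" using wf unfolding bfun_wf_def n_def by simp
  define F where "F = (\<lambda>V. snd f (map V [0..<n]))"
  have Fxs: "snd f xs = F (\<lambda>i. xs ! i)" if "length xs = n" for xs
    unfolding F_def using that map_nth_upt[of xs] by simp
  have op: "orpres F" unfolding orpres_def F_def
  proof (intro allI)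
    fix V W :: "nat \<Rightarrow> bool"
    show "snd f (map (\<lambda>v. V v \<or> W v) [0..<n]) = (snd f (map V [0..<n]) \<or> snd f (map W [0..<n]))"
      using lf unfolding lorp_def n_def by (simp add: map_disj_map2)
  qed
  define F' where "F' = (\<lambda>V. \<not> F (\<lambda>v. \<not> V v))"
  have ap: "andpres F'" unfolding andpres_def F'_def
  proof (intro allI)
    fix V W :: "nat \<Rightarrow> bool"
    have "F (\<lambda>v. \<not> V v \<or> \<not> W v) = (F (\<lambda>v. \<not> V v) \<or> F (\<lambda>v. \<not> W v))"
      using op unfolding orpres_def by (erule_tac x="\<lambda>v. \<not> V v" in allE, erule_tac x="\<lambda>v. \<not> W v" in allE) assumption
    thus "(\<not> F (\<lambda>v. \<not> (V v \<and> W v))) = ((\<not> F (\<lambda>v. \<not> V v)) \<and> (\<not> F (\<lambda>v. \<not> W v)))" by simp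
  qed
  have dp: "dep_on {..<n} F'" unfolding dep_on_def F'_def F_def
  proof (intro allI impI)
    fix V W :: "nat \<Rightarrow> bool" assume "\<forall>x\<in>{..<n}. V x = W x"
    hence "map (\<lambda>v. \<not> V v) [0..<n] = map (\<lambda>v. \<not> W v) [0..<n]" by (simp add: map_eq_conv)
    thus "(\<not> snd f (map (\<lambda>v. \<not> V v) [0..<n])) = (\<not> snd f (map (\<lambda>v. \<not> W v) [0..<n]))" by (simp only:)
  qed
  show ?thesis
  proof (cases "F (\<lambda>_. False)")
    case True
    have allT: "F V" for V
    proof -
      have "F (\<lambda>v. V v \<or> False) = (F V \<or> F (\<lambda>_. False))"
        using op unfolding orpres_def by (erule_tac x="V" in allE, erule_tac x="\<lambda>_. False" in allE) assumption
      thus ?thesis using True by simp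
    qed
    have "f = bcomp n btop [bproj n 0]"
    proof (rule bfun_eqI[OF wf])
      show "fst (bcomp n btop [bproj n 0]) = fst f" by (simp add: bcomp_def n_def)
      fix xs :: "bool list"
      show "length xs \<noteq> fst f \<Longrightarrow> \<not> snd (bcomp n btop [bproj n 0]) xs" by (simp add: bcomp_def n_def)
      assume "length xs = fst f"
      thus "snd f xs = snd (bcomp n btop [bproj n 0]) xs" using Fxs allT n_def by (simp add: bcomp_def btop_def)
    qed
    moreover have "bcomp n btop [bproj n 0] \<in> clone {bor, btop, bbot}"
      using n1 by (auto intro!: comp1I intro: clone.base clone.proj simp: btop_def)
    ultimately show ?thesis by simp
  next
    case False
    have T: "F' (\<lambda>_. True)" using False unfolding F'_def by simp
    define S where "S = {x\<in>{..<n}. \<not> F' (\<lambda>v. v \<noteq> x)}"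
    have FS: "F' V = (\<forall>x\<in>S. V x)" for V unfolding S_def by (rule conj_form[OF ap dp _ T]) simp
    have FS2: "F V = (\<exists>x\<in>S. V x)" for V
      using FS[of "\<lambda>v. \<not> V v"] unfolding F'_def by auto
    have finS: "finite S" "S \<subseteq> {..<n}" unfolding S_def by auto
    define js where "js = sorted_list_of_set S"
    have sis: "set js = S" unfolding js_def using finS by simp
    note cp = disjl_props[OF n1, of js]
    have "f = disjl n js"
    proof (rule bfun_eqI[OF wf])
      show "fst (disjl n js) = fst f" using cp sis finS by (simp add: n_def)
      fix xs :: "bool list"
      show "length xs \<noteq> fst f \<Longrightarrow> \<not> snd (disjl n js) xs" using cp sis finS by (simp add: n_def)
      assume "length xs = fst f"
      thus "snd f xs = snd (disjl n js) xs" using cp sis finS Fxs FS2 by (simp add: n_def)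
    qed
    thus ?thesis using cp sis finS by simp
  qed
qed

lemma N_complete:
  assumes wf: "bfun_wf f" and lf: "leu f"
  shows "f \<in> clone {bneg, bbot}"
proof -
  define n where "n = fst f"
  have n1: "1 \<le> n" using wf unfolding bfun_wf_def n_def by simp
  have bot: "bcomp n bbot [bproj n 0] \<in> clone {bneg, bbot}"
    using n1 by (auto intro!: comp1I intro: clone.base clone.proj simp: bbot_def)
  from lf show ?thesis unfolding leu_def
  proof (elim disjE exE conjE)
    fix c assume fc: "\<forall>xs. length xs = fst f \<longrightarrow> snd f xs = c"
    show ?thesis
    proof (cases c)
      case False
      have "f = bcomp n bbot [bproj n 0]"
        by (rule bfun_eqI[OF wf]) (use fc False in \<open>auto simp: bcomp_def bbot_def n_def\<close>)
      thus ?thesis using bot by simp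
    next
      case True
      have "f = bcomp n bneg [bcomp n bbot [bproj n 0]]"
        by (rule bfun_eqI[OF wf]) (use fc True in \<open>auto simp: bcomp_def bbot_def bneg_def n_def\<close>)
      moreover have "bcomp n bneg [bcomp n bbot [bproj n 0]] \<in> clone {bneg, bbot}"
        using n1 bot by (auto intro!: comp1I intro: clone.base simp: bneg_def)
      ultimately show ?thesis by simp
    qed
  next
    fix i b assume i: "i < fst f" and fi: "\<forall>xs. length xs = fst f \<longrightarrow> snd f xs = (xs ! i = b)"
    show ?thesis
    proof (cases b)
      case True
      have "f = bproj n i"
        by (rule bfun_eqI[OF wf]) (use fi True in \<open>auto simp: bproj_def n_def\<close>)
      thus ?thesis using n1 i clone.proj[of n i "{bneg, bbot}"] by (simp add: n_def)
    next
      case False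
      have "f = bcomp n bneg [bproj n i]"
        by (rule bfun_eqI[OF wf]) (use fi False in \<open>auto simp: bcomp_def bneg_def bproj_def n_def\<close>)
      moreover have "bcomp n bneg [bproj n i] \<in> clone {bneg, bbot}"
        using n1 i by (auto intro!: comp1I intro: clone.base clone.proj simp: bneg_def n_def)
      ultimately show ?thesis by simp
    qed
  qed
qed


lemma ops_in_clone: "Ops \<preceq>\<^sub>c X \<Longrightarrow> f \<in> Ops \<Longrightarrow> f \<in> clone X"
  unfolding clone_le_def using clone.base[of f Ops] by blast

lemma pos_E:
  assumes "Ops \<preceq>\<^sub>c {band, btop, bbot}" "in_PL Ops \<phi>"
  shows "\<exists>E. finite E \<and> card E \<le> dag_size \<phi> + 1 \<and> uniquely_characterizes Ops E \<phi>"
proof -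
  have L: "\<forall>f\<in>Ops. landp f" using ops_in_clone[OF assms(1)] clone_E_sound by blast
  obtain E where E: "finite E" "card E \<le> card (vars \<phi>) + 1" "\<forall>e\<in>E. eval (fst e) \<phi> = snd e"
    "\<forall>G. andpres G \<and> (\<forall>e\<in>E. G (fst e) = snd e) \<longrightarrow> (\<forall>V. G V = eval V \<phi>)"
    using conj_char[OF lift_andpres[OF L assms(2)] dep_on_vars finite_vars] by (elim exE conjE) (rule that; assumption)
  show ?thesis
  proof (intro exI[of _ E] conjI)
    show "finite E" by fact
    show "card E \<le> dag_size \<phi> + 1" using E(2) card_vars_le[of \<phi>] by simp
    show "uniquely_characterizes Ops E \<phi>" unfolding uniquely_characterizes_def fits_def
    proof (intro conjI allI impI)
      show "\<forall>e\<in>E. eval (fst e) \<phi> = snd e" by fact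
      fix \<psi> assume h: "in_PL Ops \<psi> \<and> (\<forall>e\<in>E. eval (fst e) \<psi> = snd e)"
      have a: "andpres (\<lambda>V. eval V \<psi>)" using lift_andpres[OF L] h by simp
      have imp: "andpres (\<lambda>V. eval V \<psi>) \<and> (\<forall>e\<in>E. eval (fst e) \<psi> = snd e) \<longrightarrow> (\<forall>V. eval V \<psi> = eval V \<phi>)"
        by (rule spec[OF E(4)])
      have "\<forall>V. eval V \<psi> = eval V \<phi>" by (rule mp[OF imp conjI[OF a conjunct2[OF h]]])
      thus "equiv_form \<psi> \<phi>" unfolding equiv_form_def by simp
    qed
  qed
qed

lemma pos_V:
  assumes "Ops \<preceq>\<^sub>c {bor, btop, bbot}" "in_PL Ops \<phi>"
  shows "\<exists>E. finite E \<and> card E \<le> dag_size \<phi> + 1 \<and> uniquely_characterizes Ops E \<phi>"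
proof -
  have L: "\<forall>f\<in>Ops. lorp f" using ops_in_clone[OF assms(1)] clone_V_sound by blast
  obtain E where E: "finite E" "card E \<le> card (vars \<phi>) + 1" "\<forall>e\<in>E. eval (fst e) \<phi> = snd e"
    "\<forall>G. orpres G \<and> (\<forall>e\<in>E. G (fst e) = snd e) \<longrightarrow> (\<forall>V. G V = eval V \<phi>)"
    using disj_char[OF lift_orpres[OF L assms(2)] dep_on_vars finite_vars] by (elim exE conjE) (rule that; assumption)
  show ?thesis
  proof (intro exI[of _ E] conjI)
    show "finite E" by fact
    show "card E \<le> dag_size \<phi> + 1" using E(2) card_vars_le[of \<phi>] by simp
    show "uniquely_characterizes Ops E \<phi>" unfolding uniquely_characterizes_def fits_def
    proof (intro conjI allI impI)
      show "\<forall>e\<in>E. eval (fst e) \<phi> = snd e" by fact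
      fix \<psi> assume h: "in_PL Ops \<psi> \<and> (\<forall>e\<in>E. eval (fst e) \<psi> = snd e)"
      have a: "orpres (\<lambda>V. eval V \<psi>)" using lift_orpres[OF L] h by simp
      have imp: "orpres (\<lambda>V. eval V \<psi>) \<and> (\<forall>e\<in>E. eval (fst e) \<psi> = snd e) \<longrightarrow> (\<forall>V. eval V \<psi> = eval V \<phi>)"
        by (rule spec[OF E(4)])
      have "\<forall>V. eval V \<psi> = eval V \<phi>" by (rule mp[OF imp conjI[OF a conjunct2[OF h]]])
      thus "equiv_form \<psi> \<phi>" unfolding equiv_form_def by simp
    qed
  qed
qed

lemma pos_N:
  assumes "Ops \<preceq>\<^sub>c {bneg, bbot}" "in_PL Ops \<phi>"
  shows "\<exists>E. finite E \<and> card E \<le> dag_size \<phi> + 1 \<and> uniquely_characterizes Ops E \<phi>"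
proof -
  have L: "\<forall>f\<in>Ops. leu f" using ops_in_clone[OF assms(1)] clone_N_sound by blast
  obtain E where E: "finite E" "card E \<le> 2" "\<forall>e\<in>E. eval (fst e) \<phi> = snd e"
    "\<forall>G. eu G \<and> (\<forall>e\<in>E. G (fst e) = snd e) \<longrightarrow> (\<forall>V. G V = eval V \<phi>)"
    using eu_char[OF lift_eu[OF L assms(2)]] by (elim exE conjE) (rule that; assumption)
  show ?thesis
  proof (intro exI[of _ E] conjI)
    show "finite E" by fact
    show "card E \<le> dag_size \<phi> + 1" using E(2) dag_pos[of \<phi>] by simp
    show "uniquely_characterizes Ops E \<phi>" unfolding uniquely_characterizes_def fits_def
    proof (intro conjI allI impI)
      show "\<forall>e\<in>E. eval (fst e) \<phi> = snd e" by fact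
      fix \<psi> assume h: "in_PL Ops \<psi> \<and> (\<forall>e\<in>E. eval (fst e) \<psi> = snd e)"
      have a: "eu (\<lambda>V. eval V \<psi>)" using lift_eu[OF L] h by simp
      have imp: "eu (\<lambda>V. eval V \<psi>) \<and> (\<forall>e\<in>E. eval (fst e) \<psi> = snd e) \<longrightarrow> (\<forall>V. eval V \<psi> = eval V \<phi>)"
        by (rule spec[OF E(4)])
      have "\<forall>V. eval V \<psi> = eval V \<phi>" by (rule mp[OF imp conjI[OF a conjunct2[OF h]]])
      thus "equiv_form \<psi> \<phi>" unfolding equiv_form_def by simp
    qed
  qed
qed


definition maj3 :: "bool \<Rightarrow> bool \<Rightarrow> bool \<Rightarrow> bool" where
  "maj3 x y z = ((x \<and> y) \<or> (y \<and> z) \<or> (x \<and> z))"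
definition xor3 :: "bool \<Rightarrow> bool \<Rightarrow> bool \<Rightarrow> bool" where
  "xor3 x y z = (x \<noteq> (y \<noteq> z))"
definition s10 :: "bool \<Rightarrow> bool \<Rightarrow> bool \<Rightarrow> bool" where
  "s10 x y z = (x \<and> (y \<or> z))"
definition s00 :: "bool \<Rightarrow> bool \<Rightarrow> bool \<Rightarrow> bool" where
  "s00 x y z = (x \<or> (y \<and> z))"

definition tgt :: "bfun set \<Rightarrow> bool" where
  "tgt Ops \<longleftrightarrow> defbl3 Ops maj3 \<or> defbl3 Ops xor3 \<or> defbl3 Ops s10 \<or> defbl3 Ops s00"

lemma defbl3_cong2: "defbl3 Ops f \<Longrightarrow> (\<forall>x y z. f x y z = g x y z) \<Longrightarrow> defbl3 Ops g"
  using defbl3_cong by blast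

lemma idem_case_0:
  assumes gd: "defbl3 Ops g" and v: "\<not> g False False False" "g True True True" "g False False True" "\<not> g True False True"
    "\<not> g False True False" "\<not> g True True False" "\<not> g False True True" "\<not> g True False False"
  shows "tgt Ops"
proof -
  have "defbl3 Ops (\<lambda>x y z. (g y (g z (g x y z) x) x))" by (rule defbl3_comp[OF gd defbl3_p2 defbl3_comp[OF gd defbl3_p3 defbl3_comp[OF gd defbl3_p1 defbl3_p2 defbl3_p3] defbl3_p1] defbl3_p1])
  hence "defbl3 Ops s10"
    by (rule defbl3_cong2) (simp add: all_bool_eq v s10_def)
  thus ?thesis unfolding tgt_def by simp
qed

lemma idem_case_1:
  assumes gd: "defbl3 Ops g" and v: "\<not> g False False False" "g True True True" "g False False True" "\<not> g True False True"
    "\<not> g False True False" "\<not> g True True False" "\<not> g False True True" "g True False False"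
  shows "tgt Ops"
proof -
  have "defbl3 Ops (\<lambda>x y z. (g x (g x y z) (g y z y)))" by (rule defbl3_comp[OF gd defbl3_p1 defbl3_comp[OF gd defbl3_p1 defbl3_p2 defbl3_p3] defbl3_comp[OF gd defbl3_p2 defbl3_p3 defbl3_p2]])
  hence "defbl3 Ops maj3"
    by (rule defbl3_cong2) (simp add: all_bool_eq v maj3_def)
  thus ?thesis unfolding tgt_def by simp
qed

lemma idem_case_2:
  assumes gd: "defbl3 Ops g" and v: "\<not> g False False False" "g True True True" "g False False True" "\<not> g True False True"
    "\<not> g False True False" "\<not> g True True False" "g False True True" "\<not> g True False False"
  shows "tgt Ops"
proof -
  have "defbl3 Ops (\<lambda>x y z. (g (g y z x) z x))" by (rule defbl3_comp[OF gd defbl3_comp[OF gd defbl3_p2 defbl3_p3 defbl3_p1] defbl3_p3 defbl3_p1])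
  hence "defbl3 Ops s10"
    by (rule defbl3_cong2) (simp add: all_bool_eq v s10_def)
  thus ?thesis unfolding tgt_def by simp
qed

lemma idem_case_3:
  assumes gd: "defbl3 Ops g" and v: "\<not> g False False False" "g True True True" "g False False True" "\<not> g True False True"
    "\<not> g False True False" "\<not> g True True False" "g False True True" "g True False False"
  shows "tgt Ops"
proof -
  have "defbl3 Ops (\<lambda>x y z. (g y x (g x y z)))" by (rule defbl3_comp[OF gd defbl3_p2 defbl3_p1 defbl3_comp[OF gd defbl3_p1 defbl3_p2 defbl3_p3]])
  hence "defbl3 Ops xor3"
    by (rule defbl3_cong2) (simp add: all_bool_eq v xor3_def)
  thus ?thesis unfolding tgt_def by simp
qed

lemma idem_case_4:
  assumes gd: "defbl3 Ops g" and v: "\<not> g False False False" "g True True True" "g False False True" "\<not> g True False True"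
    "\<not> g False True False" "g True True False" "\<not> g False True True" "\<not> g True False False"
  shows "tgt Ops"
proof -
  have "defbl3 Ops (\<lambda>x y z. (g y (g x y z) z))" by (rule defbl3_comp[OF gd defbl3_p2 defbl3_comp[OF gd defbl3_p1 defbl3_p2 defbl3_p3] defbl3_p3])
  hence "defbl3 Ops s10"
    by (rule defbl3_cong2) (simp add: all_bool_eq v s10_def)
  thus ?thesis unfolding tgt_def by simp
qed

lemma idem_case_5:
  assumes gd: "defbl3 Ops g" and v: "\<not> g False False False" "g True True True" "g False False True" "\<not> g True False True"
    "\<not> g False True False" "g True True False" "\<not> g False True True" "g True False False"
  shows "tgt Ops"
proof -
  have "defbl3 Ops (\<lambda>x y z. (g (g x y z) z y))" by (rule defbl3_comp[OF gd defbl3_comp[OF gd defbl3_p1 defbl3_p2 defbl3_p3] defbl3_p3 defbl3_p2])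
  hence "defbl3 Ops xor3"
    by (rule defbl3_cong2) (simp add: all_bool_eq v xor3_def)
  thus ?thesis unfolding tgt_def by simp
qed

lemma idem_case_6:
  assumes gd: "defbl3 Ops g" and v: "\<not> g False False False" "g True True True" "g False False True" "\<not> g True False True"
    "\<not> g False True False" "g True True False" "g False True True" "\<not> g True False False"
  shows "tgt Ops"
proof -
  have "defbl3 Ops (\<lambda>x y z. (g (g x y z) y z))" by (rule defbl3_comp[OF gd defbl3_comp[OF gd defbl3_p1 defbl3_p2 defbl3_p3] defbl3_p2 defbl3_p3])
  hence "defbl3 Ops maj3"
    by (rule defbl3_cong2) (simp add: all_bool_eq v maj3_def)
  thus ?thesis unfolding tgt_def by simp
qed

lemma idem_case_7:
  assumes gd: "defbl3 Ops g" and v: "\<not> g False False False" "g True True True" "g False False True" "\<not> g True False True"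
    "\<not> g False True False" "g True True False" "g False True True" "g True False False"
  shows "tgt Ops"
proof -
  have "defbl3 Ops (\<lambda>x y z. (g z y (g x y z)))" by (rule defbl3_comp[OF gd defbl3_p3 defbl3_p2 defbl3_comp[OF gd defbl3_p1 defbl3_p2 defbl3_p3]])
  hence "defbl3 Ops s00"
    by (rule defbl3_cong2) (simp add: all_bool_eq v s00_def)
  thus ?thesis unfolding tgt_def by simp
qed

lemma idem_case_8:
  assumes gd: "defbl3 Ops g" and v: "\<not> g False False False" "g True True True" "g False False True" "\<not> g True False True"
    "g False True False" "\<not> g True True False" "\<not> g False True True" "\<not> g True False False"
  shows "tgt Ops"
proof -
  have "defbl3 Ops (\<lambda>x y z. (g (g x y z) y z))" by (rule defbl3_comp[OF gd defbl3_comp[OF gd defbl3_p1 defbl3_p2 defbl3_p3] defbl3_p2 defbl3_p3])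
  hence "defbl3 Ops s10"
    by (rule defbl3_cong2) (simp add: all_bool_eq v s10_def)
  thus ?thesis unfolding tgt_def by simp
qed

lemma idem_case_9:
  assumes gd: "defbl3 Ops g" and v: "\<not> g False False False" "g True True True" "g False False True" "\<not> g True False True"
    "g False True False" "\<not> g True True False" "\<not> g False True True" "g True False False"
  shows "tgt Ops"
proof -
  have "defbl3 Ops (\<lambda>x y z. (g x y z))" by (rule defbl3_comp[OF gd defbl3_p1 defbl3_p2 defbl3_p3])
  hence "defbl3 Ops xor3"
    by (rule defbl3_cong2) (simp add: all_bool_eq v xor3_def)
  thus ?thesis unfolding tgt_def by simp
qed

lemma idem_case_10:
  assumes gd: "defbl3 Ops g" and v: "\<not> g False False False" "g True True True" "g False False True" "\<not> g True False True"
    "g False True False" "\<not> g True True False" "g False True True" "\<not> g True False False"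
  shows "tgt Ops"
proof -
  have "defbl3 Ops (\<lambda>x y z. (g (g x y z) y z))" by (rule defbl3_comp[OF gd defbl3_comp[OF gd defbl3_p1 defbl3_p2 defbl3_p3] defbl3_p2 defbl3_p3])
  hence "defbl3 Ops maj3"
    by (rule defbl3_cong2) (simp add: all_bool_eq v maj3_def)
  thus ?thesis unfolding tgt_def by simp
qed

lemma idem_case_11:
  assumes gd: "defbl3 Ops g" and v: "\<not> g False False False" "g True True True" "g False False True" "\<not> g True False True"
    "g False True False" "\<not> g True True False" "g False True True" "g True False False"
  shows "tgt Ops"
proof -
  have "defbl3 Ops (\<lambda>x y z. (g (g x y z) y z))" by (rule defbl3_comp[OF gd defbl3_comp[OF gd defbl3_p1 defbl3_p2 defbl3_p3] defbl3_p2 defbl3_p3])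
  hence "defbl3 Ops s00"
    by (rule defbl3_cong2) (simp add: all_bool_eq v s00_def)
  thus ?thesis unfolding tgt_def by simp
qed

lemma idem_case_12:
  assumes gd: "defbl3 Ops g" and v: "\<not> g False False False" "g True True True" "g False False True" "\<not> g True False True"
    "g False True False" "g True True False" "\<not> g False True True" "\<not> g True False False"
  shows "tgt Ops"
proof -
  have "defbl3 Ops (\<lambda>x y z. (g z (g x y z) x))" by (rule defbl3_comp[OF gd defbl3_p3 defbl3_comp[OF gd defbl3_p1 defbl3_p2 defbl3_p3] defbl3_p1])
  hence "defbl3 Ops xor3"
    by (rule defbl3_cong2) (simp add: all_bool_eq v xor3_def)
  thus ?thesis unfolding tgt_def by simp
qed

lemma idem_case_13:
  assumes gd: "defbl3 Ops g" and v: "\<not> g False False False" "g True True True" "g False False True" "\<not> g True False True"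
    "g False True False" "g True True False" "\<not> g False True True" "g True False False"
  shows "tgt Ops"
proof -
  have "defbl3 Ops (\<lambda>x y z. (g x z (g z (g x y z) y)))" by (rule defbl3_comp[OF gd defbl3_p1 defbl3_p3 defbl3_comp[OF gd defbl3_p3 defbl3_comp[OF gd defbl3_p1 defbl3_p2 defbl3_p3] defbl3_p2]])
  hence "defbl3 Ops maj3"
    by (rule defbl3_cong2) (simp add: all_bool_eq v maj3_def)
  thus ?thesis unfolding tgt_def by simp
qed

lemma idem_case_14:
  assumes gd: "defbl3 Ops g" and v: "\<not> g False False False" "g True True True" "g False False True" "\<not> g True False True"
    "g False True False" "g True True False" "g False True True" "\<not> g True False False"
  shows "tgt Ops"
proof -
  have "defbl3 Ops (\<lambda>x y z. (g (g y x z) x z))" by (rule defbl3_comp[OF gd defbl3_comp[OF gd defbl3_p2 defbl3_p1 defbl3_p3] defbl3_p1 defbl3_p3])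
  hence "defbl3 Ops s00"
    by (rule defbl3_cong2) (simp add: all_bool_eq v s00_def)
  thus ?thesis unfolding tgt_def by simp
qed

lemma idem_case_15:
  assumes gd: "defbl3 Ops g" and v: "\<not> g False False False" "g True True True" "g False False True" "\<not> g True False True"
    "g False True False" "g True True False" "g False True True" "g True False False"
  shows "tgt Ops"
proof -
  have "defbl3 Ops (\<lambda>x y z. (g y x (g z x (g x y z))))" by (rule defbl3_comp[OF gd defbl3_p2 defbl3_p1 defbl3_comp[OF gd defbl3_p3 defbl3_p1 defbl3_comp[OF gd defbl3_p1 defbl3_p2 defbl3_p3]]])
  hence "defbl3 Ops s00"
    by (rule defbl3_cong2) (simp add: all_bool_eq v s00_def)
  thus ?thesis unfolding tgt_def by simp
qed


lemma idem_tgt: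
  assumes gd: "defbl3 Ops g" and v: "\<not> g False False False" "g True True True" "g False False True" "\<not> g True False True"
  shows "tgt Ops"
proof -
  show ?thesis
  proof (cases "g False True False")
    case True
    note h1 = this
    show ?thesis
    proof (cases "g True True False")
      case True
      note h2 = this
      show ?thesis
      proof (cases "g False True True")
        case True
        note h3 = this
        show ?thesis
        proof (cases "g True False False")
          case True
          note h4 = this
          show ?thesis by (rule idem_case_15[OF assms h1 h2 h3 h4])
        next
          case False
          note h4 = this
          show ?thesis by (rule idem_case_14[OF assms h1 h2 h3 h4])
        qed
      next
        case False
        note h3 = this
        show ?thesis
        proof (cases "g True False False")
          case True
          note h4 = this
          show ?thesis by (rule idem_case_13[OF assms h1 h2 h3 h4])
        next
          case False
          note h4 = this
          show ?thesis by (rule idem_case_12[OF assms h1 h2 h3 h4])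
        qed
      qed
    next
      case False
      note h2 = this
      show ?thesis
      proof (cases "g False True True")
        case True
        note h3 = this
        show ?thesis
        proof (cases "g True False False")
          case True
          note h4 = this
          show ?thesis by (rule idem_case_11[OF assms h1 h2 h3 h4])
        next
          case False
          note h4 = this
          show ?thesis by (rule idem_case_10[OF assms h1 h2 h3 h4])
        qed
      next
        case False
        note h3 = this
        show ?thesis
        proof (cases "g True False False")
          case True
          note h4 = this
          show ?thesis by (rule idem_case_9[OF assms h1 h2 h3 h4])
        next
          case False
          note h4 = this
          show ?thesis by (rule idem_case_8[OF assms h1 h2 h3 h4])
        qed
      qed
    qed
  next
    case False
    note h1 = this
    show ?thesis
    proof (cases "g True True False")
      case True
      note h2 = this
      show ?thesis
      proof (cases "g False True True")
        case True
        note h3 = this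
        show ?thesis
        proof (cases "g True False False")
          case True
          note h4 = this
          show ?thesis by (rule idem_case_7[OF assms h1 h2 h3 h4])
        next
          case False
          note h4 = this
          show ?thesis by (rule idem_case_6[OF assms h1 h2 h3 h4])
        qed
      next
        case False
        note h3 = this
        show ?thesis
        proof (cases "g True False False")
          case True
          note h4 = this
          show ?thesis by (rule idem_case_5[OF assms h1 h2 h3 h4])
        next
          case False
          note h4 = this
          show ?thesis by (rule idem_case_4[OF assms h1 h2 h3 h4])
        qed
      qed
    next
      case False
      note h2 = this
      show ?thesis
      proof (cases "g False True True")
        case True
        note h3 = this
        show ?thesis
        proof (cases "g True False False")
          case True
          note h4 = this
          show ?thesis by (rule idem_case_3[OF assms h1 h2 h3 h4])
        next
          case False
          note h4 = this
          show ?thesis by (rule idem_case_2[OF assms h1 h2 h3 h4])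
        qed
      next
        case False
        note h3 = this
        show ?thesis
        proof (cases "g True False False")
          case True
          note h4 = this
          show ?thesis by (rule idem_case_1[OF assms h1 h2 h3 h4])
        next
          case False
          note h4 = this
          show ?thesis by (rule idem_case_0[OF assms h1 h2 h3 h4])
        qed
      qed
    qed
  qed
qed

lemma defbl_fin: "defbl Ops F \<Longrightarrow> \<exists>X. finite X \<and> dep_on X F"
proof -
  assume "defbl Ops F"
  then obtain \<psi> where "\<forall>V. eval V \<psi> = F V" unfolding defbl_def by blast
  hence "dep_on (vars \<psi>) F" using dep_on_vars[of \<psi>] unfolding dep_on_def by simp
  thus ?thesis using finite_vars by blast
qed

lemma walk:
  assumes "finite D"
  shows "(\<forall>v. v \<notin> D \<longrightarrow> V v = W v) \<Longrightarrow> P V \<noteq> P W \<Longrightarrow> \<exists>U d. P U \<noteq> P (U(d := \<not> U d))"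
  using assms
proof (induction D arbitrary: V rule: finite_induct)
  case empty
  hence "V = W" by auto
  thus ?case using empty by simp
next
  case (insert d D V)
  define V' where "V' = V(d := W d)"
  show ?case
  proof (cases "P V = P V'")
    case False
    have "V d \<noteq> W d"
    proof
      assume "V d = W d"
      hence "V' = V" unfolding V'_def by (auto simp: fun_eq_iff)
      thus False using False by simp
    qed
    hence "V' = V(d := \<not> V d)" unfolding V'_def by auto
    hence "P V \<noteq> P (V(d := \<not> V d))" using False by simp
    thus ?thesis by (intro exI)
  next
    case True
    have "\<forall>v. v \<notin> D \<longrightarrow> V' v = W v" using insert.prems(1) unfolding V'_def by auto
    moreover have "P V' \<noteq> P W" using True insert.prems(2) by simp
    ultimately show ?thesis by (rule insert.IH)
  qed
qed

lemma mono_walk: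
  assumes "finite D"
  shows "(\<forall>v. V v \<longrightarrow> W v) \<Longrightarrow> (\<forall>v. v \<notin> D \<longrightarrow> V v = W v) \<Longrightarrow> F V \<Longrightarrow> \<not> F W \<Longrightarrow>
    \<exists>U x. \<not> U x \<and> F U \<and> \<not> F (U(x := True))"
  using assms
proof (induction D arbitrary: V rule: finite_induct)
  case empty
  hence "V = W" by auto
  thus ?case using empty by simp
next
  case (insert d D V)
  define V' where "V' = V(d := W d)"
  show ?case
  proof (cases "F V'")
    case False
    have "V d \<noteq> W d"
    proof
      assume "V d = W d"
      hence "V' = V" unfolding V'_def by (auto simp: fun_eq_iff)
      thus False using False insert.prems(3) by simp
    qed
    hence nd: "\<not> V d" "W d" using insert.prems(1) by auto
    hence "V' = V(d := True)" unfolding V'_def by auto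
    hence "\<not> V d \<and> F V \<and> \<not> F (V(d := True))" using False insert.prems(3) nd by simp
    thus ?thesis by (intro exI)
  next
    case True
    have a: "\<forall>v. V' v \<longrightarrow> W v" using insert.prems(1) unfolding V'_def by auto
    have b: "\<forall>v. v \<notin> D \<longrightarrow> V' v = W v" using insert.prems(2) unfolding V'_def by auto
    show ?thesis by (rule insert.IH[OF a b True insert.prems(4)])
  qed
qed

definition fmono :: "((nat \<Rightarrow> bool) \<Rightarrow> bool) \<Rightarrow> bool" where
  "fmono F \<longleftrightarrow> (\<forall>V W. (\<forall>v. V v \<longrightarrow> W v) \<longrightarrow> F V \<longrightarrow> F W)"

lemma nonmono_flip:
  assumes "dep_on X F" "finite X" "\<not> fmono F"
  shows "\<exists>U x. \<not> U x \<and> F U \<and> \<not> F (U(x := True))"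
proof -
  obtain V W where VW: "\<forall>v. V v \<longrightarrow> W v" "F V" "\<not> F W" using assms(3) unfolding fmono_def by blast
  define W' where "W' = (\<lambda>v. if v \<in> X then W v else V v)"
  have "F W' = F W" using assms(1) unfolding dep_on_def W'_def by auto
  moreover have "\<forall>v. V v \<longrightarrow> W' v" "\<forall>v. v \<notin> X \<longrightarrow> V v = W' v" using VW(1) unfolding W'_def by auto
  ultimately show ?thesis using mono_walk[OF assms(2), of V W' F] VW by simp
qed

lemma nonconst_flip:
  assumes "dep_on X F" "finite X" "F V \<noteq> F W"
  shows "\<exists>U d. F U \<noteq> F (U(d := \<not> U d))"
proof -
  define W' where "W' = (\<lambda>v. if v \<in> X then W v else V v)"
  have "F W' = F W" using assms(1) unfolding dep_on_def W'_def by auto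
  moreover have "\<forall>v. v \<notin> X \<longrightarrow> V v = W' v" unfolding W'_def by auto
  ultimately show ?thesis using walk[OF assms(2), of V W' F] assms(3) by simp
qed

lemma bool2a: "(b False t0 \<noteq> b True t0) \<noteq> (b False (\<not> t0) \<noteq> b True (\<not> t0)) \<Longrightarrow>
   (\<exists>t. b False t \<noteq> b True t) \<and> (\<exists>s. b s False \<noteq> b s True)"
  by (cases t0) (auto simp: ex_bool_eq)

lemma bool2b: "(\<forall>t. b False t \<noteq> b True t) \<Longrightarrow> b False t0 \<noteq> b False (\<not> t0) \<Longrightarrow>
   (\<exists>t. b False t \<noteq> b True t) \<and> (\<exists>s. b s False \<noteq> b s True)"
  by (cases t0) (auto simp: ex_bool_eq all_bool_eq)

lemma dep_upd: "dep_on X F \<Longrightarrow> (\<forall>y\<in>X. V y = W y) \<Longrightarrow> F (V(x := b)) = F (W(x := b))"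
  unfolding dep_on_def by (erule_tac x="V(x := b)" in allE, erule_tac x="W(x := b)" in allE) auto

lemma tvr:
  assumes dep: "dep_on X F" "finite X" and ne: "\<not> eu F"
  shows "\<exists>x y C. x \<noteq> y \<and> (\<exists>t. F (C(x := False, y := t)) \<noteq> F (C(x := True, y := t))) \<and>
     (\<exists>s. F (C(x := s, y := False)) \<noteq> F (C(x := s, y := True)))"
proof -
  have "\<not> (\<forall>V. F V = F (\<lambda>_. False))" using ne unfolding eu_def by blast
  then obtain V where "F V \<noteq> F (\<lambda>_. False)" by blast
  then obtain U x where Ux: "F U \<noteq> F (U(x := \<not> U x))" using nonconst_flip[OF dep] by blast
  define G where "G = (\<lambda>V. F (V(x := False)) \<noteq> F (V(x := True)))"
  have GU: "G U"
  proof (cases "U x")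
    case True
    hence "U(x := True) = U" by (auto simp: fun_eq_iff)
    thus ?thesis using Ux True unfolding G_def by simp
  next
    case False
    hence "U(x := False) = U" by (auto simp: fun_eq_iff)
    thus ?thesis using Ux False unfolding G_def by simp
  qed
  have Gdep: "dep_on X G" unfolding dep_on_def G_def
  proof (intro allI impI)
    fix V W :: "nat \<Rightarrow> bool" assume a: "\<forall>x\<in>X. V x = W x"
    show "(F (V(x := False)) \<noteq> F (V(x := True))) = (F (W(x := False)) \<noteq> F (W(x := True)))"
      using dep_upd[OF dep(1) a, of x False] dep_upd[OF dep(1) a, of x True] by simp
  qed
  have Ginv: "G (V(x := b)) = G V" for V b unfolding G_def by simp
  show ?thesis
  proof (cases "\<exists>V0. \<not> G V0")
    case True
    then obtain V0 where "\<not> G V0" by blast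
    hence "G V0 \<noteq> G U" using GU by simp
    then obtain C y where Cy: "G C \<noteq> G (C(y := \<not> C y))" using nonconst_flip[OF Gdep dep(2)] by blast
    have xy: "x \<noteq> y" using Cy Ginv by auto
    define b where "b = (\<lambda>s t. F (C(x := s, y := t)))"
    have tw: "C(y := t, x := s) = C(x := s, y := t)" for s t using xy by (auto simp: fun_eq_iff)
    have Gb: "G (C(y := t)) = (b False t \<noteq> b True t)" for t
      unfolding G_def b_def by (simp add: tw)
    have "(b False (C y) \<noteq> b True (C y)) \<noteq> (b False (\<not> C y) \<noteq> b True (\<not> C y))"
      using Cy Gb[of "C y"] Gb[of "\<not> C y"] by (simp add: fun_upd_triv)
    from bool2a[OF this] xy show ?thesis unfolding b_def by blast
  next
    case False
    define H where "H = (\<lambda>V. F (V(x := False)))"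
    have Hdep: "dep_on X H" unfolding dep_on_def H_def
    proof (intro allI impI)
      fix V W :: "nat \<Rightarrow> bool" assume a: "\<forall>x\<in>X. V x = W x"
      show "F (V(x := False)) = F (W(x := False))" using dep_upd[OF dep(1) a] by simp
    qed
    have Hinv: "H (V(x := b)) = H V" for V b unfolding H_def by simp
    have "\<exists>V1 V2. H V1 \<noteq> H V2"
    proof (rule ccontr)
      assume "\<not> ?thesis"
      hence Hc: "H V = H (\<lambda>_. False)" for V by blast
      define c where "c = H (\<lambda>_. False)"
      have "F V = (V x = (\<not> c))" for V
      proof (cases "V x")
        case True
        have "G V" using False by blast
        hence "F (V(x := True)) \<noteq> H V" unfolding G_def H_def by simp
        moreover have "V(x := True) = V" using True by (auto simp: fun_eq_iff)
        ultimately show ?thesis using Hc[of V] True unfolding c_def by auto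
      next
        case False
        have "V(x := False) = V" using False by (auto simp: fun_eq_iff)
        hence "F V = H V" unfolding H_def by simp
        thus ?thesis using Hc[of V] False unfolding c_def by auto
      qed
      hence "eu F" unfolding eu_def by blast
      thus False using ne by simp
    qed
    then obtain V1 V2 where "H V1 \<noteq> H V2" by blast
    then obtain C y where Cy: "H C \<noteq> H (C(y := \<not> C y))" using nonconst_flip[OF Hdep dep(2)] by blast
    have xy: "x \<noteq> y" using Cy Hinv by auto
    define b where "b = (\<lambda>s t. F (C(x := s, y := t)))"
    have tw: "C(y := t, x := s) = C(x := s, y := t)" for s t using xy by (auto simp: fun_eq_iff)
    have ab: "\<forall>t. b False t \<noteq> b True t"
    proof
      fix t
      have "G (C(y := t))" using False by blast
      thus "b False t \<noteq> b True t" unfolding G_def b_def by (simp add: tw)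
    qed
    have "b False (C y) \<noteq> b False (\<not> C y)"
    proof -
      have "C(x := False, y := C y) = C(x := False)" using xy by (auto simp: fun_eq_iff)
      moreover have "C(y := \<not> C y, x := False) = C(x := False, y := \<not> C y)" by (rule tw)
      ultimately show ?thesis using Cy unfolding b_def H_def by simp
    qed
    from bool2b[OF ab this] xy show ?thesis unfolding b_def by blast
  qed
qed


abbreviation "hasNeg Ops \<equiv> defbl3 Ops (\<lambda>x y z. \<not> x)"
abbreviation "hasC Ops c \<equiv> defbl3 Ops (\<lambda>x y z. c)"

lemma negc: "hasNeg Ops \<Longrightarrow> defbl3 Ops (\<lambda>x y z. c \<noteq> x)"
proof (cases c)
  case True
  assume "hasNeg Ops" thus ?thesis using True by simp
next
  case False thus ?thesis using defbl3_p1 by simp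
qed

lemma idem_of:
  assumes "\<not> hasNeg Ops" "\<not> hasC Ops True" "\<not> hasC Ops False" "defbl3 Ops f"
  shows "f True True True \<and> \<not> f False False False"
proof -
  have u: "defbl3 Ops (\<lambda>x y z. f x x x)" by (rule defbl3_comp[OF assms(4) defbl3_p1 defbl3_p1 defbl3_p1])
  show ?thesis
  proof (rule ccontr)
    assume "\<not> ?thesis"
    then consider "\<not> f True True True" "\<not> f False False False" | "\<not> f True True True" "f False False False"
      | "f True True True" "f False False False" by blast
    thus False
    proof cases
      case 1 hence "hasC Ops False" by (intro defbl3_cong2[OF u]) (simp add: all_bool_eq)
      thus False using assms by simp
    next
      case 2 hence "hasNeg Ops" by (intro defbl3_cong2[OF u]) (simp add: all_bool_eq)
      thus False using assms by simp
    next
      case 3 hence "hasC Ops True" by (intro defbl3_cong2[OF u]) (simp add: all_bool_eq)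
      thus False using assms by simp
    qed
  qed
qed

lemma selfdual:
  assumes neg: "hasNeg Ops" and "\<not> hasC Ops True" "\<not> hasC Ops False" "defbl3 Ops f"
  shows "f (\<not> a) (\<not> b) (\<not> c) = (\<not> f a b c)"
proof (rule ccontr)
  assume h: "f (\<not> a) (\<not> b) (\<not> c) \<noteq> (\<not> f a b c)"
  have u: "defbl3 Ops (\<lambda>x y z. f ((\<not> a) \<noteq> x) ((\<not> b) \<noteq> x) ((\<not> c) \<noteq> x))"
    by (rule defbl3_comp[OF assms(4) negc[OF neg] negc[OF neg] negc[OF neg]])
  have "hasC Ops (f a b c)" by (rule defbl3_cong2[OF u]) (use h in \<open>simp add: all_bool_eq\<close>)
  thus False using assms(2,3) by (cases "f a b c") simp_all
qed

lemma andor_maj: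
  assumes A: "defbl3 Ops (\<lambda>x y z. x \<and> y)" and O: "defbl3 Ops (\<lambda>x y z. x \<or> y)"
  shows "defbl3 Ops maj3"
proof -
  have "defbl3 Ops (\<lambda>x y z. (x \<and> y) \<or> ((x \<or> y) \<and> z))"
    by (rule defbl3_comp[OF O A defbl3_comp[OF A O defbl3_p3 defbl3_p3] defbl3_p3])
  thus ?thesis by (rule defbl3_cong2) (auto simp: maj3_def)
qed

lemma and_maj:
  assumes neg: "hasNeg Ops" and A: "defbl3 Ops (\<lambda>x y z. x \<and> y)"
  shows "defbl3 Ops maj3"
proof -
  have n2: "defbl3 Ops (\<lambda>x y z. \<not> y)" by (rule defbl3_comp[OF neg defbl3_p2 defbl3_p2 defbl3_p2])
  have i: "defbl3 Ops (\<lambda>x y z. \<not> x \<and> \<not> y)" by (rule defbl3_comp[OF A neg n2 defbl3_p3])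
  have "defbl3 Ops (\<lambda>x y z. \<not> (\<not> x \<and> \<not> y))" by (rule defbl3_comp[OF neg i i i])
  hence O: "defbl3 Ops (\<lambda>x y z. x \<or> y)" by (rule defbl3_cong2) auto
  show ?thesis by (rule andor_maj[OF A O])
qed

lemma bin_class:
  assumes "\<exists>t. b False t \<noteq> b True t" "\<exists>s. b s False \<noteq> b s True"
  shows "(\<forall>s t. b s t = (s \<noteq> t)) \<or> (\<forall>s t. b s t = (s = t)) \<or>
         (\<exists>\<alpha> \<beta> \<gamma>. \<forall>s t. b s t = (\<gamma> \<noteq> ((\<alpha> \<noteq> s) \<and> (\<beta> \<noteq> t))))"
  using assms
  by (cases "b False False"; cases "b False True"; cases "b True False"; cases "b True True")
     (simp_all add: all_bool_eq ex_bool_eq)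

lemma flip_g:
  assumes "defbl Ops F" "\<not> fmono F"
  shows "\<exists>g. defbl3 Ops g \<and> g False False True \<and> \<not> g True False True"
proof -
  obtain X where X: "finite X" "dep_on X F" using defbl_fin[OF assms(1)] by blast
  obtain U x where Ux: "\<not> U x" "F U" "\<not> F (U(x := True))" using nonmono_flip[OF X(2,1) assms(2)] by blast
  define \<sigma> where "\<sigma> = (\<lambda>v a b c. if v = x then a else if U v then c else (b::bool))"
  have s: "defbl3 Ops (\<sigma> v)" for v
    unfolding \<sigma>_def by (cases "v = x"; cases "U v") (simp_all add: defbl3_p1 defbl3_p2 defbl3_p3)
  define g where "g = (\<lambda>a b c. F (\<lambda>v. \<sigma> v a b c))"
  have gd: "defbl3 Ops g" unfolding g_def by (rule defbl3_subst[OF assms(1) s])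
  have "(\<lambda>v. \<sigma> v False False True) = U" using Ux(1) unfolding \<sigma>_def by (auto simp: fun_eq_iff)
  moreover have "(\<lambda>v. \<sigma> v True False True) = U(x := True)" unfolding \<sigma>_def by (auto simp: fun_eq_iff)
  ultimately have "g False False True" "\<not> g True False True" unfolding g_def using Ux by simp_all
  thus ?thesis using gd by blast
qed

lemma case_C0:
  assumes gd: "defbl3 Ops g" and v: "g False False True" "\<not> g True False True"
    and nn: "\<not> hasNeg Ops" and C0: "hasC Ops False"
  shows "tgt Ops"
proof -
  have u: "defbl3 Ops (\<lambda>x y z. g x False x)" by (rule defbl3_comp[OF gd defbl3_p1 C0 defbl3_p1])
  have g0: "\<not> g False False False"
  proof
    assume "g False False False"
    hence "hasNeg Ops" by (intro defbl3_cong2[OF u]) (use v in \<open>simp add: all_bool_eq\<close>)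
    thus False using nn by simp
  qed
  show ?thesis
  proof (cases "g True False False")
    case True
    have h1: "defbl3 Ops (\<lambda>x y z. g x False y)" by (rule defbl3_comp[OF gd defbl3_p1 C0 defbl3_p2])
    have "defbl3 Ops (\<lambda>x y z. g (g x False y) False z)" by (rule defbl3_comp[OF h1 h1 defbl3_p3 defbl3_p3])
    hence "defbl3 Ops xor3" by (rule defbl3_cong2) (use v g0 True in \<open>simp add: all_bool_eq xor3_def\<close>)
    thus ?thesis unfolding tgt_def by simp
  next
    case False
    have k: "defbl3 Ops (\<lambda>x y z. g y False x)" by (rule defbl3_comp[OF gd defbl3_p2 C0 defbl3_p1])
    have "defbl3 Ops (\<lambda>x y z. g (g z False (g y False x)) False x)"
      by (rule defbl3_comp[OF k defbl3_p1 defbl3_comp[OF k k defbl3_p3 defbl3_p3] defbl3_p3])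
    hence "defbl3 Ops s10" by (rule defbl3_cong2) (use v g0 False in \<open>simp add: all_bool_eq s10_def\<close>)
    thus ?thesis unfolding tgt_def by simp
  qed
qed

lemma case_C1:
  assumes gd: "defbl3 Ops g" and v: "g False False True" "\<not> g True False True"
    and nn: "\<not> hasNeg Ops" and C1: "hasC Ops True"
  shows "tgt Ops"
proof -
  have u: "defbl3 Ops (\<lambda>x y z. g x x True)" by (rule defbl3_comp[OF gd defbl3_p1 defbl3_p1 C1])
  have g1: "g True True True"
  proof (rule ccontr)
    assume "\<not> g True True True"
    hence "hasNeg Ops" by (intro defbl3_cong2[OF u]) (use v in \<open>simp add: all_bool_eq\<close>)
    thus False using nn by simp
  qed
  show ?thesis
  proof (cases "g False True True")
    case False
    have e: "defbl3 Ops (\<lambda>x y z. g x y True)" by (rule defbl3_comp[OF gd defbl3_p1 defbl3_p2 C1])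
    have "defbl3 Ops (\<lambda>x y z. g (g x y True) z True)" by (rule defbl3_comp[OF e e defbl3_p3 defbl3_p3])
    hence "defbl3 Ops xor3" by (rule defbl3_cong2) (use v g1 False in \<open>simp add: all_bool_eq xor3_def\<close>)
    thus ?thesis unfolding tgt_def by simp
  next
    case True
    have k: "defbl3 Ops (\<lambda>x y z. g y x True)" by (rule defbl3_comp[OF gd defbl3_p2 defbl3_p1 C1])
    have "defbl3 Ops (\<lambda>x y z. g (g z (g y x True) True) x True)"
      by (rule defbl3_comp[OF k defbl3_p1 defbl3_comp[OF k k defbl3_p3 defbl3_p3] defbl3_p3])
    hence "defbl3 Ops s00" by (rule defbl3_cong2) (use v g1 True in \<open>simp add: all_bool_eq s00_def\<close>)
    thus ?thesis unfolding tgt_def by simp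
  qed
qed


lemma case_neg:
  assumes neg: "hasNeg Ops" and F3: "defbl Ops F" "\<not> eu F"
  shows "tgt Ops"
proof -
  obtain X where X: "finite X" "dep_on X F" using defbl_fin[OF F3(1)] by blast
  obtain x y C where xy: "x \<noteq> y" and d1: "\<exists>t. F (C(x := False, y := t)) \<noteq> F (C(x := True, y := t))"
    and d2: "\<exists>s. F (C(x := s, y := False)) \<noteq> F (C(x := s, y := True))"
    using tvr[OF X(2,1) F3(2)] by blast
  define b where "b = (\<lambda>s t. F (C(x := s, y := t)))"
  have dep2: "\<exists>t. b False t \<noteq> b True t" "\<exists>s. b s False \<noteq> b s True" using d1 d2 unfolding b_def by auto
  have nz: "defbl3 Ops (\<lambda>x y z. \<not> z)" by (rule defbl3_comp[OF neg defbl3_p3 defbl3_p3 defbl3_p3])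
  define \<sigma> where "\<sigma> = (\<lambda>v s t (w::bool). if v = x then s else if v = y then t else if C v then w else \<not> w)"
  have s: "defbl3 Ops (\<sigma> v)" for v
    unfolding \<sigma>_def by (cases "v = x"; cases "v = y"; cases "C v") (simp_all add: defbl3_p1 defbl3_p2 defbl3_p3 nz)
  define G where "G = (\<lambda>s t w. F (\<lambda>v. \<sigma> v s t w))"
  have Gd: "defbl3 Ops G" unfolding G_def by (rule defbl3_subst[OF F3(1) s])
  have GT: "G s t True = b s t" for s t
  proof -
    have "(\<lambda>v. \<sigma> v s t True) = C(x := s, y := t)" using xy unfolding \<sigma>_def by (auto simp: fun_eq_iff)
    thus ?thesis unfolding G_def b_def by simp
  qed
  have n2: "defbl3 Ops (\<lambda>x y z. \<beta> \<noteq> y)" for \<beta> by (rule defbl3_comp[OF negc[OF neg] defbl3_p2 defbl3_p2 defbl3_p2])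
  show ?thesis
  proof (cases "hasC Ops True \<or> hasC Ops False")
    case True
    have C1: "hasC Ops True"
    proof (cases "hasC Ops True")
      case False
      hence C0: "hasC Ops False" using True by simp
      have "defbl3 Ops (\<lambda>x y z. \<not> False)" by (rule defbl3_comp[OF neg C0 C0 C0])
      thus ?thesis by simp
    qed simp
    have b3: "defbl3 Ops (\<lambda>x y z. G x y True)" by (rule defbl3_comp[OF Gd defbl3_p1 defbl3_p2 C1])
    from bin_class[OF dep2] show ?thesis
    proof (elim disjE exE)
      assume bf: "\<forall>s t. b s t = (s \<noteq> t)"
      have "defbl3 Ops (\<lambda>x y z. G (G x y True) z True)" by (rule defbl3_comp[OF b3 b3 defbl3_p3 defbl3_p3])
      hence "defbl3 Ops xor3" by (rule defbl3_cong2) (simp add: GT bf xor3_def all_bool_eq)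
      thus ?thesis unfolding tgt_def by simp
    next
      assume bf: "\<forall>s t. b s t = (s = t)"
      have "defbl3 Ops (\<lambda>x y z. G (G x y True) z True)" by (rule defbl3_comp[OF b3 b3 defbl3_p3 defbl3_p3])
      hence "defbl3 Ops xor3" by (rule defbl3_cong2) (auto simp: GT bf xor3_def)
      thus ?thesis unfolding tgt_def by simp
    next
      fix \<alpha> \<beta> \<gamma> assume bf: "\<forall>s t. b s t = (\<gamma> \<noteq> ((\<alpha> \<noteq> s) \<and> (\<beta> \<noteq> t)))"
      have m: "defbl3 Ops (\<lambda>x y z. G (\<alpha> \<noteq> x) (\<beta> \<noteq> y) True)"
        by (rule defbl3_comp[OF b3 negc[OF neg] n2 defbl3_p3])
      have "defbl3 Ops (\<lambda>x y z. \<gamma> \<noteq> G (\<alpha> \<noteq> x) (\<beta> \<noteq> y) True)"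
        by (rule defbl3_comp[OF negc[OF neg] m m m])
      hence "defbl3 Ops (\<lambda>x y z. x \<and> y)" by (rule defbl3_cong2) (cases \<alpha>; cases \<beta>; cases \<gamma>; simp add: GT bf)
      hence "defbl3 Ops maj3" by (rule and_maj[OF neg])
      thus ?thesis unfolding tgt_def by simp
    qed
  next
    case False
    hence nc: "\<not> hasC Ops True" "\<not> hasC Ops False" by auto
    have GF: "G s t False = (\<not> b (\<not> s) (\<not> t))" for s t
      using selfdual[OF neg nc Gd, of "\<not> s" "\<not> t" True] GT[of "\<not> s" "\<not> t"] by simp
    from bin_class[OF dep2] show ?thesis
    proof (elim disjE exE)
      assume bf: "\<forall>s t. b s t = (s \<noteq> t)"
      have "defbl3 Ops (\<lambda>x y z. \<not> G x y z)" by (rule defbl3_comp[OF neg Gd Gd Gd])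
      hence "defbl3 Ops xor3" by (rule defbl3_cong2) (simp add: all_bool_eq GT GF bf xor3_def)
      thus ?thesis unfolding tgt_def by simp
    next
      assume bf: "\<forall>s t. b s t = (s = t)"
      have "defbl3 Ops xor3" by (rule defbl3_cong2[OF Gd]) (simp add: all_bool_eq GT GF bf xor3_def)
      thus ?thesis unfolding tgt_def by simp
    next
      fix \<alpha> \<beta> \<gamma> assume bf: "\<forall>s t. b s t = (\<gamma> \<noteq> ((\<alpha> \<noteq> s) \<and> (\<beta> \<noteq> t)))"
      have m: "defbl3 Ops (\<lambda>x y z. G (\<alpha> \<noteq> x) (\<beta> \<noteq> y) (\<not> z))"
        by (rule defbl3_comp[OF Gd negc[OF neg] n2 nz])
      have "defbl3 Ops (\<lambda>x y z. \<gamma> \<noteq> G (\<alpha> \<noteq> x) (\<beta> \<noteq> y) (\<not> z))"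
        by (rule defbl3_comp[OF negc[OF neg] m m m])
      hence "defbl3 Ops maj3" by (rule defbl3_cong2) (cases \<alpha>; cases \<beta>; cases \<gamma>; simp add: all_bool_eq GT GF bf maj3_def)
      thus ?thesis unfolding tgt_def by simp
    qed
  qed
qed


lemma mono5:
  assumes m: "\<forall>a b c a' b' c'. (a \<longrightarrow> a') \<longrightarrow> (b \<longrightarrow> b') \<longrightarrow> (c \<longrightarrow> c') \<longrightarrow> g a b c \<longrightarrow> g a' b' c'"
    and v: "g False True True" "g True False True" "\<not> g False False True"
  shows "(\<forall>y z w. g y z w = s10 w y z) \<or> (\<forall>y z w. g y z w = maj3 y z w) \<or>
         (\<forall>y z w. g y z w = s00 y z w) \<or> (\<forall>y z w. g y z w = s00 z y w) \<or> (\<forall>y z w. g y z w = (y \<or> z))"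
proof -
  have m1: "\<not> g False False False" using m[rule_format, where a=False and b=False and c=False and a'=False and b'=False and c'=True] v(3) by auto
  have m2: "g True True True" using m[rule_format, where a=False and b=True and c=True and a'=True and b'=True and c'=True] v(1) by auto
  have m3: "g True False False \<longrightarrow> g True True False" using m[rule_format, where a=True and b=False and c=False and a'=True and b'=True and c'=False] by auto
  have m4: "g False True False \<longrightarrow> g True True False" using m[rule_format, where a=False and b=True and c=False and a'=True and b'=True and c'=False] by auto
  show ?thesis using v m1 m2 m3 m4
    by (cases "g True False False"; cases "g False True False"; cases "g True True False")
       (simp_all add: all_bool_eq s10_def s00_def maj3_def)
qed

lemma I1:
  assumes Fd: "defbl Ops F" and mF: "fmono F" and na: "\<not> andpres F"
  shows "tgt Ops \<or> defbl3 Ops (\<lambda>x y z. x \<or> y)"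
proof -
  obtain V W where VW: "F (\<lambda>v. V v \<and> W v) \<noteq> (F V \<and> F W)" using na unfolding andpres_def by blast
  have mono_app: "F A \<Longrightarrow> (\<And>v. A v \<Longrightarrow> B v) \<Longrightarrow> F B" for A B
  proof -
    assume a: "F A" "\<And>v. A v \<Longrightarrow> B v"
    have "\<forall>v. A v \<longrightarrow> B v" using a(2) by simp
    thus "F B" using mF a(1) unfolding fmono_def
      by (erule_tac x=A in allE, erule_tac x=B in allE) simp
  qed
  have FV: "F V" "F W" "\<not> F (\<lambda>v. V v \<and> W v)"
    using VW mono_app[of "\<lambda>v. V v \<and> W v" V] mono_app[of "\<lambda>v. V v \<and> W v" W] by auto
  define \<sigma> where "\<sigma> = (\<lambda>v y z (w::bool). if V v then (if W v then w else z) else y)"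
  have s: "defbl3 Ops (\<sigma> v)" for v
    unfolding \<sigma>_def by (cases "V v"; cases "W v") (simp_all add: defbl3_p1 defbl3_p2 defbl3_p3)
  define g where "g = (\<lambda>y z w. F (\<lambda>v. \<sigma> v y z w))"
  have gd: "defbl3 Ops g" unfolding g_def by (rule defbl3_subst[OF Fd s])
  have gm: "\<forall>a b c a' b' c'. (a \<longrightarrow> a') \<longrightarrow> (b \<longrightarrow> b') \<longrightarrow> (c \<longrightarrow> c') \<longrightarrow> g a b c \<longrightarrow> g a' b' c'"
  proof (intro allI impI)
    fix a b c a' b' c' assume h: "a \<longrightarrow> a'" "b \<longrightarrow> b'" "c \<longrightarrow> c'" "g a b c"
    show "g a' b' c'" unfolding g_def
      by (rule mono_app[OF h(4)[unfolded g_def]]) (use h(1-3) in \<open>auto simp: \<sigma>_def split: if_splits\<close>)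
  qed
  have "(\<lambda>v. \<sigma> v False True True) = V" unfolding \<sigma>_def by (auto simp: fun_eq_iff)
  hence v1: "g False True True" unfolding g_def using FV by simp
  have v2: "g True False True" unfolding g_def
    by (rule mono_app[OF FV(2)]) (auto simp: \<sigma>_def)
  have "(\<lambda>v. \<sigma> v False False True) = (\<lambda>v. V v \<and> W v)" unfolding \<sigma>_def by (auto simp: fun_eq_iff)
  hence v3: "\<not> g False False True" unfolding g_def using FV by simp
  from mono5[OF gm v1 v2 v3] show ?thesis
  proof (elim disjE)
    assume e: "\<forall>y z w. g y z w = s10 w y z"
    have "defbl3 Ops (\<lambda>x y z. g y z x)" by (rule defbl3_comp[OF gd defbl3_p2 defbl3_p3 defbl3_p1])
    hence "defbl3 Ops s10" by (rule defbl3_cong2) (simp add: e)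
    thus ?thesis unfolding tgt_def by simp
  next
    assume e: "\<forall>y z w. g y z w = maj3 y z w"
    have "defbl3 Ops maj3" by (rule defbl3_cong2[OF gd]) (simp add: e)
    thus ?thesis unfolding tgt_def by simp
  next
    assume e: "\<forall>y z w. g y z w = s00 y z w"
    have "defbl3 Ops s00" by (rule defbl3_cong2[OF gd]) (simp add: e)
    thus ?thesis unfolding tgt_def by simp
  next
    assume e: "\<forall>y z w. g y z w = s00 z y w"
    have "defbl3 Ops (\<lambda>x y z. g y x z)" by (rule defbl3_comp[OF gd defbl3_p2 defbl3_p1 defbl3_p3])
    hence "defbl3 Ops s00" by (rule defbl3_cong2) (simp add: e)
    thus ?thesis unfolding tgt_def by simp
  next
    assume e: "\<forall>y z w. g y z w = (y \<or> z)"
    have "defbl3 Ops (\<lambda>x y z. x \<or> y)" by (rule defbl3_cong2[OF gd]) (simp add: e)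
    thus ?thesis by simp
  qed
qed

lemma I2:
  assumes Fd: "defbl Ops F" and mF: "fmono F" and na: "\<not> orpres F"
  shows "tgt Ops \<or> defbl3 Ops (\<lambda>x y z. x \<and> y)"
proof -
  obtain V W where VW: "F (\<lambda>v. V v \<or> W v) \<noteq> (F V \<or> F W)" using na unfolding orpres_def by blast
  have mono_app: "F A \<Longrightarrow> (\<And>v. A v \<Longrightarrow> B v) \<Longrightarrow> F B" for A B
  proof -
    assume a: "F A" "\<And>v. A v \<Longrightarrow> B v"
    have "\<forall>v. A v \<longrightarrow> B v" using a(2) by simp
    thus "F B" using mF a(1) unfolding fmono_def
      by (erule_tac x=A in allE, erule_tac x=B in allE) simp
  qed
  have FV: "\<not> F V" "\<not> F W" "F (\<lambda>v. V v \<or> W v)"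
    using VW mono_app[of V "\<lambda>v. V v \<or> W v"] mono_app[of W "\<lambda>v. V v \<or> W v"] by auto
  define \<sigma> where "\<sigma> = (\<lambda>v y z (w::bool). if V v then y else if W v then z else w)"
  have s: "defbl3 Ops (\<sigma> v)" for v
    unfolding \<sigma>_def by (cases "V v"; cases "W v") (simp_all add: defbl3_p1 defbl3_p2 defbl3_p3)
  define g where "g = (\<lambda>y z w. F (\<lambda>v. \<sigma> v y z w))"
  have gd: "defbl3 Ops g" unfolding g_def by (rule defbl3_subst[OF Fd s])
  define d where "d = (\<lambda>y z w. \<not> g (\<not> y) (\<not> z) (\<not> w))"
  have gm: "\<forall>a b c a' b' c'. (a \<longrightarrow> a') \<longrightarrow> (b \<longrightarrow> b') \<longrightarrow> (c \<longrightarrow> c') \<longrightarrow> g a b c \<longrightarrow> g a' b' c'"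
  proof (intro allI impI)
    fix a b c a' b' c' assume h: "a \<longrightarrow> a'" "b \<longrightarrow> b'" "c \<longrightarrow> c'" "g a b c"
    show "g a' b' c'" unfolding g_def
      by (rule mono_app[OF h(4)[unfolded g_def]]) (use h(1-3) in \<open>auto simp: \<sigma>_def split: if_splits\<close>)
  qed
  have dm: "\<forall>a b c a' b' c'. (a \<longrightarrow> a') \<longrightarrow> (b \<longrightarrow> b') \<longrightarrow> (c \<longrightarrow> c') \<longrightarrow> d a b c \<longrightarrow> d a' b' c'"
  proof (intro allI impI)
    fix a b c a' b' c' assume h: "a \<longrightarrow> a'" "b \<longrightarrow> b'" "c \<longrightarrow> c'" "d a b c"
    have "g (\<not> a') (\<not> b') (\<not> c') \<longrightarrow> g (\<not> a) (\<not> b) (\<not> c)"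
      using gm[rule_format, where a="\<not> a'" and b="\<not> b'" and c="\<not> c'" and a'="\<not> a" and b'="\<not> b" and c'="\<not> c"] h(1-3) by auto
    thus "d a' b' c'" using h(4) unfolding d_def by blast
  qed
  have "(\<lambda>v. \<sigma> v True False False) = V" unfolding \<sigma>_def by (auto simp: fun_eq_iff)
  hence v1: "d False True True" unfolding d_def g_def using FV by simp
  have v2: "d True False True"
  proof -
    have "\<not> F (\<lambda>v. \<sigma> v False True False)"
    proof
      assume "F (\<lambda>v. \<sigma> v False True False)"
      hence "F W" by (rule mono_app) (auto simp: \<sigma>_def split: if_splits)
      thus False using FV by simp
    qed
    thus ?thesis unfolding d_def g_def by simp
  qed
  have "(\<lambda>v. \<sigma> v True True False) = (\<lambda>v. V v \<or> W v)" unfolding \<sigma>_def by (auto simp: fun_eq_iff)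
  hence v3: "\<not> d False False True" unfolding d_def g_def using FV by simp
  have gd': "g y z w = (\<not> d (\<not> y) (\<not> z) (\<not> w))" for y z w unfolding d_def by simp
  from mono5[OF dm v1 v2 v3] show ?thesis
  proof (elim disjE)
    assume e: "\<forall>y z w. d y z w = s10 w y z"
    have "defbl3 Ops (\<lambda>x y z. g y z x)" by (rule defbl3_comp[OF gd defbl3_p2 defbl3_p3 defbl3_p1])
    hence "defbl3 Ops s00" by (rule defbl3_cong2) (simp add: gd' e s10_def s00_def)
    thus ?thesis unfolding tgt_def by simp
  next
    assume e: "\<forall>y z w. d y z w = maj3 y z w"
    have "defbl3 Ops maj3" by (rule defbl3_cong2[OF gd]) (auto simp: gd' e maj3_def)
    thus ?thesis unfolding tgt_def by simp
  next
    assume e: "\<forall>y z w. d y z w = s00 y z w"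
    have "defbl3 Ops s10" by (rule defbl3_cong2[OF gd]) (simp add: gd' e s10_def s00_def)
    thus ?thesis unfolding tgt_def by simp
  next
    assume e: "\<forall>y z w. d y z w = s00 z y w"
    have "defbl3 Ops (\<lambda>x y z. g y x z)" by (rule defbl3_comp[OF gd defbl3_p2 defbl3_p1 defbl3_p3])
    hence "defbl3 Ops s10" by (rule defbl3_cong2) (simp add: gd' e s10_def s00_def)
    thus ?thesis unfolding tgt_def by simp
  next
    assume e: "\<forall>y z w. d y z w = (y \<or> z)"
    have "defbl3 Ops (\<lambda>x y z. x \<and> y)" by (rule defbl3_cong2[OF gd]) (simp add: gd' e)
    thus ?thesis by simp
  qed
qed

lemma classify:
  assumes d1: "defbl Ops F1" "\<not> andpres F1" and d2: "defbl Ops F2" "\<not> orpres F2"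
    and d3: "defbl Ops F3" "\<not> eu F3"
  shows "tgt Ops"
proof (cases "fmono F1 \<and> fmono F2")
  case True
  have a: "tgt Ops \<or> defbl3 Ops (\<lambda>x y z. x \<or> y)" using I1[OF d1(1) _ d1(2)] True by simp
  have b: "tgt Ops \<or> defbl3 Ops (\<lambda>x y z. x \<and> y)" using I2[OF d2(1) _ d2(2)] True by simp
  show ?thesis
  proof (cases "tgt Ops")
    case False
    hence "defbl3 Ops (\<lambda>x y z. x \<or> y)" "defbl3 Ops (\<lambda>x y z. x \<and> y)" using a b by auto
    hence "defbl3 Ops maj3" by (intro andor_maj)
    thus ?thesis unfolding tgt_def by simp
  qed simp
next
  case False
  have "\<exists>g. defbl3 Ops g \<and> g False False True \<and> \<not> g True False True"
  proof (cases "fmono F1")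
    case True
    hence "\<not> fmono F2" using False by simp
    thus ?thesis by (rule flip_g[OF d2(1)])
  next
    case False
    thus ?thesis by (rule flip_g[OF d1(1)])
  qed
  then obtain g where g: "defbl3 Ops g" "g False False True" "\<not> g True False True" by auto
  show ?thesis
  proof (cases "hasNeg Ops")
    case True thus ?thesis using case_neg[OF True d3] by simp
  next
    case nn: False
    show ?thesis
    proof (cases "hasC Ops False")
      case True thus ?thesis using case_C0[OF g nn] by simp
    next
      case n0: False
      show ?thesis
      proof (cases "hasC Ops True")
        case True thus ?thesis using case_C1[OF g nn] by simp
      next
        case n1: False
        have "g True True True \<and> \<not> g False False False" by (rule idem_of[OF nn n1 n0 g(1)])
        thus ?thesis using idem_tgt[OF g(1)] g(2,3) by simp
      qed
    qed
  qed
qed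


definition tmpl :: "form \<Rightarrow> form \<Rightarrow> form \<Rightarrow> form \<Rightarrow> form" where
  "tmpl \<psi> p q r = subst (\<lambda>v. if v = 0 then p else if v = 1 then q else r) \<psi>"

lemma tmpl_props:
  assumes "in_PL Ops \<psi>" "\<forall>V. eval V \<psi> = f (V 0) (V 1) (V 2)"
  shows "in_PL Ops p \<Longrightarrow> in_PL Ops q \<Longrightarrow> in_PL Ops r \<Longrightarrow> in_PL Ops (tmpl \<psi> p q r)"
    and "eval V (tmpl \<psi> p q r) = f (eval V p) (eval V q) (eval V r)"
    and "card (subforms (tmpl \<psi> p q r)) \<le> card (subforms \<psi>) + card (subforms p \<union> subforms q \<union> subforms r)"
proof -
  define \<sigma> where "\<sigma> = (\<lambda>v::nat. if v = 0 then p else if v = 1 then q else r)"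
  show "in_PL Ops p \<Longrightarrow> in_PL Ops q \<Longrightarrow> in_PL Ops r \<Longrightarrow> in_PL Ops (tmpl \<psi> p q r)"
    unfolding tmpl_def by (rule in_PL_subst[OF assms(1)]) auto
  show "eval V (tmpl \<psi> p q r) = f (eval V p) (eval V q) (eval V r)"
    unfolding tmpl_def eval_subst using assms(2) by simp
  have "subforms (tmpl \<psi> p q r) \<subseteq> subst \<sigma> ` subforms \<psi> \<union> (\<Union>v\<in>vars \<psi>. subforms (\<sigma> v))"
    unfolding tmpl_def \<sigma>_def[symmetric] by (rule subforms_subst)
  also have "\<dots> \<subseteq> subst \<sigma> ` subforms \<psi> \<union> (subforms p \<union> subforms q \<union> subforms r)"
    unfolding \<sigma>_def by (auto split: if_splits)
  finally have sub: "subforms (tmpl \<psi> p q r) \<subseteq> subst \<sigma> ` subforms \<psi> \<union> (subforms p \<union> subforms q \<union> subforms r)" .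
  have fin: "finite (subst \<sigma> ` subforms \<psi> \<union> (subforms p \<union> subforms q \<union> subforms r))"
    by (simp add: finite_subforms)
  have "card (subforms (tmpl \<psi> p q r)) \<le> card (subst \<sigma> ` subforms \<psi> \<union> (subforms p \<union> subforms q \<union> subforms r))"
    by (rule card_mono[OF fin sub])
  also have "\<dots> \<le> card (subst \<sigma> ` subforms \<psi>) + card (subforms p \<union> subforms q \<union> subforms r)"
    by (rule card_Un_le)
  also have "\<dots> \<le> card (subforms \<psi>) + card (subforms p \<union> subforms q \<union> subforms r)"
    using card_image_le[OF finite_subforms] by simp
  finally show "card (subforms (tmpl \<psi> p q r)) \<le> card (subforms \<psi>) + card (subforms p \<union> subforms q \<union> subforms r)" .
qed

lemma defbl3_tmpl:
  assumes "defbl3 Ops f"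
  shows "\<exists>\<psi>. in_PL Ops \<psi> \<and> (\<forall>V. eval V \<psi> = f (V 0) (V 1) (V 2))"
  using assms unfolding defbl3_def defbl_def by simp

lemma count_lb:
  assumes "finite E" "\<forall>S. S \<subseteq> {..<m} \<longrightarrow> (\<exists>e\<in>E. \<kappa> (fst e) = S)"
  shows "2 ^ m \<le> card E"
proof -
  have "Pow {..<m} \<subseteq> (\<lambda>e. \<kappa> (fst e)) ` E" using assms(2) by auto
  hence "card (Pow {..<m}) \<le> card ((\<lambda>e. \<kappa> (fst e)) ` E)" by (intro card_mono) (auto simp: assms(1))
  also have "\<dots> \<le> card E" by (rule card_image_le[OF assms(1)])
  finally show ?thesis by (simp add: card_Pow)
qed

lemma xor_lb:
  assumes "defbl3 Ops xor3"
  shows "\<not> (\<exists>p :: real poly. \<forall>\<phi>. in_PL Ops \<phi> \<longrightarrow>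
                  (\<exists>E. finite E \<and> real (card E) \<le> poly p (real (dag_size \<phi>))
                       \<and> uniquely_characterizes Ops E \<phi>))"
proof
  assume "\<exists>p :: real poly. \<forall>\<phi>. in_PL Ops \<phi> \<longrightarrow> (\<exists>E. finite E \<and> real (card E) \<le> poly p (real (dag_size \<phi>))
                       \<and> uniquely_characterizes Ops E \<phi>)"
  then obtain p :: "real poly" where p: "\<forall>\<phi>. in_PL Ops \<phi> \<longrightarrow> (\<exists>E. finite E \<and> real (card E) \<le> poly p (real (dag_size \<phi>))
                       \<and> uniquely_characterizes Ops E \<phi>)" by (elim exE)
  have "\<exists>E. finite E \<and> real (card E) \<le> poly p (real (dag_size (Var 0))) \<and> uniquely_characterizes Ops E (Var 0)"
    using spec[OF p, of "Var 0"] by simp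
  then obtain E where E: "finite E" "uniquely_characterizes Ops E (Var 0)" by (elim exE conjE)
  obtain \<psi> where \<psi>: "in_PL Ops \<psi>" "\<forall>V. eval V \<psi> = xor3 (V 0) (V 1) (V 2)"
    using defbl3_tmpl[OF assms] by (elim exE conjE)
  define col where "col = (\<lambda>y. {e\<in>E. fst e y})"
  have "\<not> inj_on col {1..}"
  proof
    assume "inj_on col {1..}"
    moreover have "finite (col ` {1..})"
      by (rule finite_subset[of _ "Pow E"]) (auto simp: col_def E(1))
    ultimately have "finite ({1..} :: nat set)" using finite_imageD by blast
    thus False using infinite_Ici[of "1::nat"] by simp
  qed
  then obtain y y' where yy: "y \<in> {1..}" "y' \<in> {1..}" "y \<noteq> y'" "col y = col y'"
    unfolding inj_on_def by blast
  have same: "\<forall>e\<in>E. fst e y = fst e y'"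
  proof
    fix e assume "e \<in> E"
    moreover have "(e \<in> col y) = (e \<in> col y')" using yy(4) by simp
    ultimately show "fst e y = fst e y'" unfolding col_def by simp
  qed
  define \<chi> where "\<chi> = tmpl \<psi> (Var 0) (Var y) (Var y')"
  have ch: "in_PL Ops \<chi>" "eval V \<chi> = xor3 (V 0) (V y) (V y')" for V
    unfolding \<chi>_def using tmpl_props[OF \<psi>] by auto
  have fitsE: "\<forall>e\<in>E. fits (Var 0) e" using E(2) unfolding uniquely_characterizes_def by blast
  have "\<forall>e\<in>E. fits \<chi> e"
  proof
    fix e assume e: "e \<in> E"
    have "fst e 0 = snd e" using fitsE e unfolding fits_def by simp
    thus "fits \<chi> e" unfolding fits_def using ch(2) same e by (simp add: xor3_def)
  qed
  hence "equiv_form \<chi> (Var 0)" using E(2) ch(1) unfolding uniquely_characterizes_def by simp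
  hence "eval (\<lambda>v. v = y) \<chi> = eval (\<lambda>v. v = y) (Var 0)" unfolding equiv_form_def by (rule spec)
  thus False using ch(2) yy by (simp add: xor3_def)
qed


lemma pow_exp_lim: "((\<lambda>n::nat. real n ^ k / 2 ^ n) \<longlonglongrightarrow> 0)"
proof -
  have l2: "ln (2::real) > 0" by simp
  have f: "filterlim (\<lambda>n::nat. ln 2 * real n) at_top sequentially"
    by (rule filterlim_tendsto_pos_mult_at_top[OF tendsto_const l2 filterlim_real_sequentially])
  have "((\<lambda>n::nat. (ln 2 * real n) ^ k / exp (ln 2 * real n)) \<longlonglongrightarrow> 0)"
    using filterlim_compose[OF tendsto_power_div_exp_0 f] by (simp add: o_def)
  hence "((\<lambda>n::nat. (ln 2 * real n) ^ k / exp (ln 2 * real n) / (ln 2)^k) \<longlonglongrightarrow> 0 / (ln 2)^k)"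
    by (intro tendsto_divide tendsto_const) auto
  moreover have "(\<lambda>n::nat. (ln 2 * real n) ^ k / exp (ln 2 * real n) / (ln 2)^k) = (\<lambda>n. real n ^ k / 2 ^ n)"
  proof
    fix n :: nat
    have "exp (ln 2 * real n) = (2::real) ^ n"
      by (simp add: exp_of_nat2_mult)
    thus "(ln 2 * real n) ^ k / exp (ln 2 * real n) / (ln 2)^k = real n ^ k / 2 ^ n"
      using l2 by (simp add: power_mult_distrib)
  qed
  ultimately show ?thesis by simp
qed

lemma poly_le_bound:
  fixes p :: "real poly" assumes "x \<ge> 1"
  shows "poly p x \<le> (\<Sum>i\<le>degree p. \<bar>coeff p i\<bar>) * x ^ degree p"
proof -
  have "poly p x = (\<Sum>i\<le>degree p. coeff p i * x ^ i)" by (rule poly_altdef)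
  also have "\<dots> \<le> (\<Sum>i\<le>degree p. \<bar>coeff p i\<bar> * x ^ degree p)"
  proof (rule sum_mono)
    fix i assume "i \<in> {..degree p}"
    hence "x ^ i \<le> x ^ degree p" using assms by (intro power_increasing) auto
    hence "\<bar>coeff p i\<bar> * x ^ i \<le> \<bar>coeff p i\<bar> * x ^ degree p" by (intro mult_left_mono) auto
    moreover have "coeff p i * x ^ i \<le> \<bar>coeff p i\<bar> * x ^ i" using assms
      by (intro mult_right_mono) auto
    ultimately show "coeff p i * x ^ i \<le> \<bar>coeff p i\<bar> * x ^ degree p" by linarith
  qed
  also have "\<dots> = (\<Sum>i\<le>degree p. \<bar>coeff p i\<bar>) * x ^ degree p" by (simp add: sum_distrib_right)
  finally show ?thesis .
qed

lemma growth:
  fixes p :: "real poly" and c :: nat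
  shows "\<exists>n::nat. \<forall>x. 1 \<le> x \<longrightarrow> x \<le> real (c * (n + 1)) \<longrightarrow> poly p x < 2 ^ n"
proof -
  define C where "C = (\<Sum>i\<le>degree p. \<bar>coeff p i\<bar>)"
  define k where "k = degree p"
  define M where "M = real (2 * c)"
  have C0: "C \<ge> 0" unfolding C_def by (intro sum_nonneg) auto
  have "((\<lambda>n::nat. C * M ^ k * (real n ^ k / 2 ^ n)) \<longlonglongrightarrow> C * M ^ k * 0)"
    by (intro tendsto_mult tendsto_const pow_exp_lim)
  hence "eventually (\<lambda>n. C * M ^ k * (real n ^ k / 2 ^ n) < 1) sequentially"
    by (intro order_tendstoD) auto
  then obtain N where N: "\<And>n. n \<ge> N \<Longrightarrow> C * M ^ k * (real n ^ k / 2 ^ n) < 1"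
    by (auto simp: eventually_sequentially)
  define n where "n = N + 1"
  have n1: "n \<ge> 1" "n \<ge> N" unfolding n_def by auto
  show ?thesis
  proof (intro exI allI impI)
    fix x :: real assume x1: "1 \<le> x" and xb: "x \<le> real (c * (n + 1))"
    have "real c * 1 \<le> real c * real n" using n1 by (intro mult_left_mono) auto
    hence "real (c * (n + 1)) \<le> M * real n" unfolding M_def by simp
    hence xM: "x \<le> M * real n" using xb by linarith
    have "poly p x \<le> C * x ^ k" using poly_le_bound[OF x1] unfolding C_def k_def .
    also have "\<dots> \<le> C * (M * real n) ^ k" using x1 xM C0
      by (intro mult_left_mono power_mono) auto
    also have "\<dots> = C * M ^ k * (real n ^ k / 2 ^ n) * 2 ^ n" by (simp add: power_mult_distrib)
    also have "\<dots> < 1 * 2 ^ n" using N[OF n1(2)] by (intro mult_strict_right_mono) auto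
    finally show "poly p x < 2 ^ n" by simp
  qed
qed


definition xv :: "nat \<Rightarrow> form" where "xv i = Var (2 * i + 2)"
definition yv :: "nat \<Rightarrow> form" where "yv i = Var (2 * i + 3)"
definition zv :: "nat set \<Rightarrow> nat \<Rightarrow> form" where "zv S i = (if i \<in> S then xv i else yv i)"

fun Dch :: "(form \<Rightarrow> form \<Rightarrow> form) \<Rightarrow> (form \<Rightarrow> form \<Rightarrow> form) \<Rightarrow> nat \<Rightarrow> form" where
  "Dch A Ob 0 = A (xv 0) (yv 0)"
| "Dch A Ob (Suc k) = Ob (A (xv (Suc k)) (yv (Suc k))) (Dch A Ob k)"

fun Mch :: "(form \<Rightarrow> form \<Rightarrow> form) \<Rightarrow> nat set \<Rightarrow> nat \<Rightarrow> form" where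
  "Mch A S 0 = zv S 0"
| "Mch A S (Suc k) = A (zv S (Suc k)) (Mch A S k)"

definition wV :: "bool \<Rightarrow> bool \<Rightarrow> (nat \<Rightarrow> bool) \<Rightarrow> (nat \<Rightarrow> bool) \<Rightarrow> nat \<Rightarrow> bool" where
  "wV c0 c1 X Y = (\<lambda>v. if v = 0 then c0 else if v = 1 then c1 else if even v then X ((v - 2) div 2) else Y ((v - 3) div 2))"

lemma wV_simps: "wV c0 c1 X Y 0 = c0" "wV c0 c1 X Y 1 = c1"
  "wV c0 c1 X Y (2 * i + 2) = X i" "wV c0 c1 X Y (2 * i + 3) = Y i"
  unfolding wV_def by auto

locale fam =
  fixes Ops :: "bfun set" and A Ob :: "form \<Rightarrow> form \<Rightarrow> form"
    and Aop Oop :: "(nat \<Rightarrow> bool) \<Rightarrow> bool \<Rightarrow> bool \<Rightarrow> bool" and kA kO :: nat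
  assumes inA: "\<And>p q. in_PL Ops p \<Longrightarrow> in_PL Ops q \<Longrightarrow> in_PL Ops (A p q)"
    and inO: "\<And>p q. in_PL Ops p \<Longrightarrow> in_PL Ops q \<Longrightarrow> in_PL Ops (Ob p q)"
    and evA: "\<And>V p q. eval V (A p q) = Aop V (eval V p) (eval V q)"
    and evO: "\<And>V p q. eval V (Ob p q) = Oop V (eval V p) (eval V q)"
    and cA: "\<And>p q. card (subforms (A p q)) \<le> kA + card (subforms p \<union> subforms q)"
    and cO: "\<And>p q. card (subforms (Ob p q)) \<le> kO + card (subforms p \<union> subforms q)"
    and modes: "\<And>V. ((\<forall>a b. Aop V a b = (a \<and> b)) \<and> ((\<forall>a b. Oop V a b = (a \<or> b)) \<or> (\<forall>a b. Oop V a b = (a \<and> b)) \<or> (\<forall>a b. \<not> Oop V a b)))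
       \<or> ((\<forall>a b. Aop V a b = (a \<or> b)) \<and> ((\<forall>a b. Oop V a b = (a \<and> b)) \<or> (\<forall>a b. Oop V a b = (a \<or> b)) \<or> (\<forall>a b. Oop V a b)))"
    and wit: "(\<exists>c0 c1. \<forall>V. V 0 = c0 \<longrightarrow> V 1 = c1 \<longrightarrow> (\<forall>a b. Aop V a b = (a \<and> b)) \<and> (\<forall>a b. Oop V a b = (a \<or> b)))
       \<or> (\<exists>c0 c1. \<forall>V. V 0 = c0 \<longrightarrow> V 1 = c1 \<longrightarrow> (\<forall>a b. Aop V a b = (a \<or> b)) \<and> (\<forall>a b. Oop V a b = (a \<and> b)))"
begin

definition phi :: "nat \<Rightarrow> form" where "phi n = Ob (Dch A Ob n) (Dch A Ob n)"
definition psi :: "nat \<Rightarrow> nat set \<Rightarrow> form" where "psi n S = Ob (phi n) (Mch A S n)"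

lemma in_D: "in_PL Ops (Dch A Ob k)"
  by (induction k) (auto intro!: inA inO simp: xv_def yv_def)
lemma in_M: "in_PL Ops (Mch A S k)"
  by (induction k) (auto intro!: inA simp: zv_def xv_def yv_def)
lemma in_phi: "in_PL Ops (phi n)" unfolding phi_def by (intro inO in_D)
lemma in_psi: "in_PL Ops (psi n S)" unfolding psi_def by (intro inO in_phi in_M)

lemma ev_zv: "eval V (zv S i) = (if i \<in> S then V (2 * i + 2) else V (2 * i + 3))"
  by (simp add: zv_def xv_def yv_def)

lemma exS: "(\<exists>i<Suc k. P i) = (P k \<or> (\<exists>i<k. P i))"
  by (metis less_Suc_eq)
lemma allS: "(\<forall>i<Suc k. P i) = (P k \<and> (\<forall>i<k. P i))"
  by (metis less_Suc_eq)

lemma D_and_or: assumes a: "\<forall>a b. Aop V a b = (a \<and> b)" and o: "\<forall>a b. Oop V a b = (a \<or> b)"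
  shows "eval V (Dch A Ob k) = (\<exists>i<Suc k. V (2 * i + 2) \<and> V (2 * i + 3))"
proof (induction k)
  case 0 show ?case by (simp add: evA a xv_def yv_def)
next
  case (Suc k) show ?case using Suc.IH by (simp only: Dch.simps evA evO a o exS[of "Suc k"]) (simp add: xv_def yv_def)
qed
lemma D_or_and: assumes a: "\<forall>a b. Aop V a b = (a \<or> b)" and o: "\<forall>a b. Oop V a b = (a \<and> b)"
  shows "eval V (Dch A Ob k) = (\<forall>i<Suc k. V (2 * i + 2) \<or> V (2 * i + 3))"
proof (induction k)
  case 0 show ?case by (simp add: evA a xv_def yv_def)
next
  case (Suc k) show ?case using Suc.IH by (simp only: Dch.simps evA evO a o allS[of "Suc k"]) (simp add: xv_def yv_def)
qed
lemma D_and_and: assumes a: "\<forall>a b. Aop V a b = (a \<and> b)" and o: "\<forall>a b. Oop V a b = (a \<and> b)"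
  shows "eval V (Dch A Ob k) = (\<forall>i<Suc k. V (2 * i + 2) \<and> V (2 * i + 3))"
proof (induction k)
  case 0 show ?case by (simp add: evA a xv_def yv_def)
next
  case (Suc k) show ?case using Suc.IH by (simp only: Dch.simps evA evO a o allS[of "Suc k"]) (simp add: xv_def yv_def)
qed
lemma D_or_or: assumes a: "\<forall>a b. Aop V a b = (a \<or> b)" and o: "\<forall>a b. Oop V a b = (a \<or> b)"
  shows "eval V (Dch A Ob k) = (\<exists>i<Suc k. V (2 * i + 2) \<or> V (2 * i + 3))"
proof (induction k)
  case 0 show ?case by (simp add: evA a xv_def yv_def)
next
  case (Suc k) show ?case using Suc.IH by (simp only: Dch.simps evA evO a o exS[of "Suc k"]) (simp add: xv_def yv_def)
qed
lemma M_and: assumes a: "\<forall>a b. Aop V a b = (a \<and> b)"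
  shows "eval V (Mch A S k) = (\<forall>i<Suc k. eval V (zv S i))"
proof (induction k)
  case 0 show ?case by simp
next
  case (Suc k) show ?case using Suc.IH by (simp only: Mch.simps evA a allS[of "Suc k"])
qed
lemma M_or: assumes a: "\<forall>a b. Aop V a b = (a \<or> b)"
  shows "eval V (Mch A S k) = (\<exists>i<Suc k. eval V (zv S i))"
proof (induction k)
  case 0 show ?case by simp
next
  case (Suc k) show ?case using Suc.IH by (simp only: Mch.simps evA a exS[of "Suc k"])
qed

definition kappa :: "nat \<Rightarrow> (nat \<Rightarrow> bool) \<Rightarrow> nat set" where
  "kappa n V = {i. i < Suc n \<and> V (2 * i + 2) \<noteq> Aop V True False}"

lemma diff_kappa:
  assumes S: "S \<subseteq> {..<Suc n}" and d: "eval V (psi n S) \<noteq> eval V (phi n)"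
  shows "kappa n V = S"
proof -
  have ph: "eval V (phi n) = Oop V (eval V (Dch A Ob n)) (eval V (Dch A Ob n))" unfolding phi_def evO ..
  have ps: "eval V (psi n S) = Oop V (eval V (phi n)) (eval V (Mch A S n))" unfolding psi_def evO ..
  from modes[of V] show ?thesis
  proof (elim disjE conjE)
    assume a: "\<forall>a b. Aop V a b = (a \<and> b)" and o: "\<forall>a b. Oop V a b = (a \<or> b)"
    have nD: "\<not> (\<exists>i<Suc n. V (2 * i + 2) \<and> V (2 * i + 3))" and M: "\<forall>i<Suc n. eval V (zv S i)"
      using d ph ps D_and_or[OF a o, of n] M_and[OF a, of S n] o by auto
    have "\<forall>i<Suc n. V (2 * i + 2) = (i \<in> S)"
    proof (intro allI impI)
      fix i assume i: "i < Suc n"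
      show "V (2 * i + 2) = (i \<in> S)" using nD i M[rule_format, OF i] unfolding ev_zv by (cases "i \<in> S") auto
    qed
    thus ?thesis using S a unfolding kappa_def by auto
  next
    assume a: "\<forall>a b. Aop V a b = (a \<and> b)" and o: "\<forall>a b. Oop V a b = (a \<and> b)"
    have D: "eval V (Dch A Ob n) \<Longrightarrow> eval V (Mch A S n)"
      using D_and_and[OF a o, of n] M_and[OF a, of S n] unfolding ev_zv by auto
    thus ?thesis using d ph ps o by auto
  next
    assume a: "\<forall>a b. Aop V a b = (a \<and> b)" and o: "\<forall>a b. \<not> Oop V a b"
    thus ?thesis using d ph ps by auto
  next
    assume a: "\<forall>a b. Aop V a b = (a \<or> b)" and o: "\<forall>a b. Oop V a b = (a \<and> b)"
    have D: "\<forall>i<Suc n. V (2 * i + 2) \<or> V (2 * i + 3)" and nM: "\<not> (\<exists>i<Suc n. eval V (zv S i))"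
      using d ph ps D_or_and[OF a o, of n] M_or[OF a, of S n] o by auto
    have "\<forall>i<Suc n. V (2 * i + 2) = (i \<notin> S)"
    proof (intro allI impI)
      fix i assume i: "i < Suc n"
      show "V (2 * i + 2) = (i \<notin> S)" using nM i D[rule_format, OF i] unfolding ev_zv by (cases "i \<in> S") auto
    qed
    thus ?thesis using S a unfolding kappa_def by auto
  next
    assume a: "\<forall>a b. Aop V a b = (a \<or> b)" and o: "\<forall>a b. Oop V a b = (a \<or> b)"
    have D: "eval V (Mch A S n) \<Longrightarrow> eval V (Dch A Ob n)"
      using D_or_or[OF a o, of n] M_or[OF a, of S n] unfolding ev_zv by (auto split: if_splits)
    thus ?thesis using d ph ps o by auto
  next
    assume a: "\<forall>a b. Aop V a b = (a \<or> b)" and o: "\<forall>a b. Oop V a b"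
    thus ?thesis using d ph ps by auto
  qed
qed

lemma witness: "\<exists>V. eval V (psi n S) \<noteq> eval V (phi n)"
proof -
  have ph: "eval V (phi n) = Oop V (eval V (Dch A Ob n)) (eval V (Dch A Ob n))" for V unfolding phi_def evO ..
  have ps: "eval V (psi n S) = Oop V (eval V (phi n)) (eval V (Mch A S n))" for V unfolding psi_def evO ..
  from wit show ?thesis
  proof (elim disjE exE)
    fix c0 c1 assume w: "\<forall>V. V 0 = c0 \<longrightarrow> V 1 = c1 \<longrightarrow> (\<forall>a b. Aop V a b = (a \<and> b)) \<and> (\<forall>a b. Oop V a b = (a \<or> b))"
    define V where "V = wV c0 c1 (\<lambda>i. i \<in> S) (\<lambda>i. i \<notin> S)"
    have v0: "V 0 = c0" and v1: "V 1 = c1" unfolding V_def wV_def by simp_all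
    have ao: "(\<forall>a b. Aop V a b = (a \<and> b)) \<and> (\<forall>a b. Oop V a b = (a \<or> b))"
      using spec[OF w, of V] v0 v1 by simp
    hence a: "\<forall>a b. Aop V a b = (a \<and> b)" and o: "\<forall>a b. Oop V a b = (a \<or> b)" by simp_all
    have xi: "V (2 * i + 2) = (i \<in> S)" and yi: "V (2 * i + 3) = (i \<notin> S)" for i
      unfolding V_def by (simp_all only: wV_simps)
    have "\<not> eval V (Dch A Ob n)" unfolding D_and_or[OF a o] xi yi by simp
    moreover have "eval V (Mch A S n)" unfolding M_and[OF a] ev_zv xi yi by simp
    ultimately have "eval V (psi n S) \<noteq> eval V (phi n)" unfolding ph ps using o by simp
    thus ?thesis by blast
  next
    fix c0 c1 assume w: "\<forall>V. V 0 = c0 \<longrightarrow> V 1 = c1 \<longrightarrow> (\<forall>a b. Aop V a b = (a \<or> b)) \<and> (\<forall>a b. Oop V a b = (a \<and> b))"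
    define V where "V = wV c0 c1 (\<lambda>i. i \<notin> S) (\<lambda>i. i \<in> S)"
    have v0: "V 0 = c0" and v1: "V 1 = c1" unfolding V_def wV_def by simp_all
    have ao: "(\<forall>a b. Aop V a b = (a \<or> b)) \<and> (\<forall>a b. Oop V a b = (a \<and> b))"
      using spec[OF w, of V] v0 v1 by simp
    hence a: "\<forall>a b. Aop V a b = (a \<or> b)" and o: "\<forall>a b. Oop V a b = (a \<and> b)" by simp_all
    have xi: "V (2 * i + 2) = (i \<notin> S)" and yi: "V (2 * i + 3) = (i \<in> S)" for i
      unfolding V_def by (simp_all only: wV_simps)
    have "eval V (Dch A Ob n)" unfolding D_or_and[OF a o] xi yi by simp
    moreover have "\<not> eval V (Mch A S n)" unfolding M_or[OF a] ev_zv xi yi by simp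
    ultimately have "eval V (psi n S) \<noteq> eval V (phi n)" unfolding ph ps using o by simp
    thus ?thesis by blast
  qed
qed

lemma card_two_vars: "card (subforms (Var a) \<union> subforms (Var b)) \<le> 2"
  by (simp add: card_insert_if)

lemma dag_D: "dag_size (Dch A Ob k) \<le> (kA + kO + 2) * Suc k"
proof (induction k)
  case 0
  have c1: "card (subforms (Dch A Ob 0)) \<le> kA + card (subforms (xv 0) \<union> subforms (yv 0))" using cA by simp
  have c2: "card (subforms (xv 0) \<union> subforms (yv 0)) \<le> 2" unfolding xv_def yv_def by (rule card_two_vars)
  show ?case unfolding dag_size_def using c1 c2 by simp
next
  case (Suc k)
  have a: "card (subforms (A (xv (Suc k)) (yv (Suc k)))) \<le> kA + 2"
  proof -
    have c1: "card (subforms (A (xv (Suc k)) (yv (Suc k)))) \<le> kA + card (subforms (xv (Suc k)) \<union> subforms (yv (Suc k)))" by (rule cA)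
    have c2: "card (subforms (xv (Suc k)) \<union> subforms (yv (Suc k))) \<le> 2" unfolding xv_def yv_def by (rule card_two_vars)
    show ?thesis using c1 c2 by simp
  qed
  have "card (subforms (Dch A Ob (Suc k))) \<le> kO + card (subforms (A (xv (Suc k)) (yv (Suc k))) \<union> subforms (Dch A Ob k))"
    using cO by simp
  also have "\<dots> \<le> kO + (card (subforms (A (xv (Suc k)) (yv (Suc k)))) + card (subforms (Dch A Ob k)))"
    using card_Un_le by (simp add: add_le_mono)
  also have "\<dots> \<le> kO + (kA + 2 + (kA + kO + 2) * Suc k)"
    using a Suc.IH unfolding dag_size_def by simp
  finally show ?case unfolding dag_size_def by simp
qed

lemma dag_phi: "dag_size (phi n) \<le> (2 * (kA + kO + 2)) * (n + 1)"
proof -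
  have "dag_size (phi n) \<le> kO + card (subforms (Dch A Ob n))" unfolding dag_size_def phi_def using cO[of "Dch A Ob n" "Dch A Ob n"] by simp
  also have "\<dots> \<le> kO + (kA + kO + 2) * Suc n" using dag_D[of n] unfolding dag_size_def by simp
  also have "\<dots> \<le> (2 * (kA + kO + 2)) * (n + 1)"
  proof -
    have k: "kO \<le> (kA + kO + 2) * Suc n" using mult_le_mono[of kO "kA + kO + 2" 1 "Suc n"] by simp
    have e: "(2 * (kA + kO + 2)) * (n + 1) = (kA + kO + 2) * Suc n + (kA + kO + 2) * Suc n" by (simp only: mult_2 distrib_right Suc_eq_plus1)
    show ?thesis unfolding e using k by linarith
  qed
  finally show ?thesis .
qed

theorem no_poly:
  "\<not> (\<exists>p :: real poly. \<forall>\<phi>. in_PL Ops \<phi> \<longrightarrow>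
                  (\<exists>E. finite E \<and> real (card E) \<le> poly p (real (dag_size \<phi>))
                       \<and> uniquely_characterizes Ops E \<phi>))"
proof
  assume "\<exists>p :: real poly. \<forall>\<phi>. in_PL Ops \<phi> \<longrightarrow> (\<exists>E. finite E \<and> real (card E) \<le> poly p (real (dag_size \<phi>))
                       \<and> uniquely_characterizes Ops E \<phi>)"
  then obtain p :: "real poly" where p: "\<forall>\<phi>. in_PL Ops \<phi> \<longrightarrow> (\<exists>E. finite E \<and> real (card E) \<le> poly p (real (dag_size \<phi>))
                       \<and> uniquely_characterizes Ops E \<phi>)" by (elim exE)
  obtain n where n: "\<forall>x. 1 \<le> x \<longrightarrow> x \<le> real ((2 * (kA + kO + 2)) * (n + 1)) \<longrightarrow> poly p x < 2 ^ n"
    using growth[where p=p and c="2 * (kA + kO + 2)"] by (elim exE)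
  have "\<exists>E. finite E \<and> real (card E) \<le> poly p (real (dag_size (phi n))) \<and> uniquely_characterizes Ops E (phi n)"
    using spec[OF p, of "phi n"] in_phi by simp
  then obtain E where E: "finite E" "real (card E) \<le> poly p (real (dag_size (phi n)))"
    "uniquely_characterizes Ops E (phi n)" by (elim exE conjE)
  have fitphi: "\<forall>e\<in>E. fits (phi n) e" using E(3) unfolding uniquely_characterizes_def by simp
  have cover: "\<forall>S. S \<subseteq> {..<Suc n} \<longrightarrow> (\<exists>e\<in>E. kappa n (fst e) = S)"
  proof (intro allI impI)
    fix S assume S: "S \<subseteq> {..<Suc n}"
    have "\<not> equiv_form (psi n S) (phi n)" using witness[of n S] unfolding equiv_form_def by auto
    hence "\<not> (\<forall>e\<in>E. fits (psi n S) e)" using E(3) in_psi[of n S] unfolding uniquely_characterizes_def by auto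
    then obtain e where e: "e \<in> E" "\<not> fits (psi n S) e" by auto
    have "eval (fst e) (psi n S) \<noteq> eval (fst e) (phi n)" using e fitphi unfolding fits_def by auto
    hence "kappa n (fst e) = S" by (rule diff_kappa[OF S])
    thus "\<exists>e\<in>E. kappa n (fst e) = S" using e(1) by blast
  qed
  have "2 ^ Suc n \<le> card E" by (rule count_lb[OF E(1) cover])
  hence "(2::real) ^ Suc n \<le> real (card E)" by (metis of_nat_le_iff of_nat_numeral of_nat_power)
  also have "\<dots> \<le> poly p (real (dag_size (phi n)))" by (rule E(2))
  also have "\<dots> < 2 ^ n"
  proof -
    have h1: "1 \<le> real (dag_size (phi n))" using dag_pos[of "phi n"] by simp
    have h2: "real (dag_size (phi n)) \<le> real ((2 * (kA + kO + 2)) * (n + 1))"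
      using dag_phi[of n] by (simp only: of_nat_le_iff)
    show ?thesis using n h1 h2 by blast
  qed
  finally show False by simp
qed

end


lemma card_var_un: "card (subforms (Var a) \<union> X \<union> Y) \<le> 1 + card (X \<union> Y)"
proof -
  have "subforms (Var a) \<union> X \<union> Y = {Var a} \<union> (X \<union> Y)" by auto
  thus ?thesis using card_Un_le[of "{Var a}" "X \<union> Y"] by simp
qed

lemma maj_lb:
  assumes "defbl3 Ops maj3"
  shows "\<not> (\<exists>p :: real poly. \<forall>\<phi>. in_PL Ops \<phi> \<longrightarrow>
                  (\<exists>E. finite E \<and> real (card E) \<le> poly p (real (dag_size \<phi>))
                       \<and> uniquely_characterizes Ops E \<phi>))"
proof -
  obtain \<psi> where \<psi>: "in_PL Ops \<psi>" "\<forall>V. eval V \<psi> = maj3 (V 0) (V 1) (V 2)"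
    using defbl3_tmpl[OF assms] by (elim exE conjE)
  note tp = tmpl_props[OF \<psi>]
  interpret fam Ops "\<lambda>p q. tmpl \<psi> (Var 0) p q" "\<lambda>p q. tmpl \<psi> (Var 1) p q"
    "\<lambda>V a b. maj3 (V 0) a b" "\<lambda>V a b. maj3 (V 1) a b" "card (subforms \<psi>) + 1" "card (subforms \<psi>) + 1"
  proof
    show "\<And>p q. in_PL Ops p \<Longrightarrow> in_PL Ops q \<Longrightarrow> in_PL Ops (tmpl \<psi> (Var 0) p q)" using tp(1) by simp
    show "\<And>p q. in_PL Ops p \<Longrightarrow> in_PL Ops q \<Longrightarrow> in_PL Ops (tmpl \<psi> (Var 1) p q)" using tp(1) by simp
    show "\<And>V p q. eval V (tmpl \<psi> (Var 0) p q) = maj3 (V 0) (eval V p) (eval V q)" using tp(2) by simp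
    show "\<And>V p q. eval V (tmpl \<psi> (Var 1) p q) = maj3 (V 1) (eval V p) (eval V q)" using tp(2) by simp
    show "\<And>p q. card (subforms (tmpl \<psi> (Var 0) p q)) \<le> card (subforms \<psi>) + 1 + card (subforms p \<union> subforms q)"
    proof -
      fix p q
      show "card (subforms (tmpl \<psi> (Var 0) p q)) \<le> card (subforms \<psi>) + 1 + card (subforms p \<union> subforms q)"
        using tp(3)[of "Var 0" p q] card_var_un[of 0 "subforms p" "subforms q"] by linarith
    qed
    show "\<And>p q. card (subforms (tmpl \<psi> (Var 1) p q)) \<le> card (subforms \<psi>) + 1 + card (subforms p \<union> subforms q)"
    proof -
      fix p q
      show "card (subforms (tmpl \<psi> (Var 1) p q)) \<le> card (subforms \<psi>) + 1 + card (subforms p \<union> subforms q)"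
        using tp(3)[of "Var 1" p q] card_var_un[of 1 "subforms p" "subforms q"] by linarith
    qed
    show "\<And>V. ((\<forall>a b. maj3 (V 0) a b = (a \<and> b)) \<and> ((\<forall>a b. maj3 (V 1) a b = (a \<or> b)) \<or> (\<forall>a b. maj3 (V 1) a b = (a \<and> b)) \<or> (\<forall>a b. \<not> maj3 (V 1) a b)))
       \<or> ((\<forall>a b. maj3 (V 0) a b = (a \<or> b)) \<and> ((\<forall>a b. maj3 (V 1) a b = (a \<and> b)) \<or> (\<forall>a b. maj3 (V 1) a b = (a \<or> b)) \<or> (\<forall>a b. maj3 (V 1) a b)))"
      by (case_tac "V 0"; case_tac "V 1") (simp_all add: maj3_def all_bool_eq)
    show "(\<exists>c0 c1. \<forall>V. V 0 = c0 \<longrightarrow> V 1 = c1 \<longrightarrow> (\<forall>a b. maj3 (V 0) a b = (a \<and> b)) \<and> (\<forall>a b. maj3 (V 1) a b = (a \<or> b)))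
       \<or> (\<exists>c0 c1. \<forall>V. V 0 = c0 \<longrightarrow> V 1 = c1 \<longrightarrow> (\<forall>a b. maj3 (V 0) a b = (a \<or> b)) \<and> (\<forall>a b. maj3 (V 1) a b = (a \<and> b)))"
      by (rule disjI1, rule exI[of _ False], rule exI[of _ True]) (simp add: maj3_def all_bool_eq)
  qed
  show ?thesis by (rule no_poly)
qed


lemma s10_lb:
  assumes "defbl3 Ops s10"
  shows "\<not> (\<exists>p :: real poly. \<forall>\<phi>. in_PL Ops \<phi> \<longrightarrow>
                  (\<exists>E. finite E \<and> real (card E) \<le> poly p (real (dag_size \<phi>))
                       \<and> uniquely_characterizes Ops E \<phi>))"
proof -
  obtain \<psi> where \<psi>: "in_PL Ops \<psi>" "\<forall>V. eval V \<psi> = s10 (V 0) (V 1) (V 2)"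
    using defbl3_tmpl[OF assms] by (elim exE conjE)
  note tp = tmpl_props[OF \<psi>]
  interpret fam Ops "\<lambda>p q. tmpl \<psi> p q q" "\<lambda>p q. tmpl \<psi> (Var 0) p q"
    "\<lambda>V a b. s10 a b b" "\<lambda>V a b. s10 (V 0) a b" "card (subforms \<psi>)" "card (subforms \<psi>) + 1"
  proof
    show "\<And>p q. in_PL Ops p \<Longrightarrow> in_PL Ops q \<Longrightarrow> in_PL Ops (tmpl \<psi> p q q)" using tp(1) by simp
    show "\<And>p q. in_PL Ops p \<Longrightarrow> in_PL Ops q \<Longrightarrow> in_PL Ops (tmpl \<psi> (Var 0) p q)" using tp(1) by simp
    show "\<And>V p q. eval V (tmpl \<psi> p q q) = s10 (eval V p) (eval V q) (eval V q)" using tp(2) by simp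
    show "\<And>V p q. eval V (tmpl \<psi> (Var 0) p q) = s10 (V 0) (eval V p) (eval V q)" using tp(2) by simp
    show "\<And>p q. card (subforms (tmpl \<psi> p q q)) \<le> card (subforms \<psi>) + card (subforms p \<union> subforms q)"
    proof -
      fix p q
      show "card (subforms (tmpl \<psi> p q q)) \<le> card (subforms \<psi>) + card (subforms p \<union> subforms q)"
        using tp(3)[of p q q] by (simp add: Un_absorb)
    qed
    show "\<And>p q. card (subforms (tmpl \<psi> (Var 0) p q)) \<le> card (subforms \<psi>) + 1 + card (subforms p \<union> subforms q)"
    proof -
      fix p q
      show "card (subforms (tmpl \<psi> (Var 0) p q)) \<le> card (subforms \<psi>) + 1 + card (subforms p \<union> subforms q)"
        using tp(3)[of "Var 0" p q] card_var_un[of 0 "subforms p" "subforms q"] by linarith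
    qed
    show "\<And>V. ((\<forall>a b. s10 a b b = (a \<and> b)) \<and> ((\<forall>a b. s10 (V 0) a b = (a \<or> b)) \<or> (\<forall>a b. s10 (V 0) a b = (a \<and> b)) \<or> (\<forall>a b. \<not> s10 (V 0) a b)))
       \<or> ((\<forall>a b. s10 a b b = (a \<or> b)) \<and> ((\<forall>a b. s10 (V 0) a b = (a \<and> b)) \<or> (\<forall>a b. s10 (V 0) a b = (a \<or> b)) \<or> (\<forall>a b. s10 (V 0) a b)))"
      by (case_tac "V 0") (simp_all add: s10_def all_bool_eq)
    show "(\<exists>c0 c1. \<forall>V. V 0 = c0 \<longrightarrow> V 1 = c1 \<longrightarrow> (\<forall>a b. s10 a b b = (a \<and> b)) \<and> (\<forall>a b. s10 (V 0) a b = (a \<or> b)))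
       \<or> (\<exists>c0 c1. \<forall>V. V 0 = c0 \<longrightarrow> V 1 = c1 \<longrightarrow> (\<forall>a b. s10 a b b = (a \<or> b)) \<and> (\<forall>a b. s10 (V 0) a b = (a \<and> b)))"
      by (rule disjI1, rule exI[of _ True], rule exI[of _ True]) (simp add: s10_def all_bool_eq)
  qed
  show ?thesis by (rule no_poly)
qed

lemma s00_lb:
  assumes "defbl3 Ops s00"
  shows "\<not> (\<exists>p :: real poly. \<forall>\<phi>. in_PL Ops \<phi> \<longrightarrow>
                  (\<exists>E. finite E \<and> real (card E) \<le> poly p (real (dag_size \<phi>))
                       \<and> uniquely_characterizes Ops E \<phi>))"
proof -
  obtain \<psi> where \<psi>: "in_PL Ops \<psi>" "\<forall>V. eval V \<psi> = s00 (V 0) (V 1) (V 2)"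
    using defbl3_tmpl[OF assms] by (elim exE conjE)
  note tp = tmpl_props[OF \<psi>]
  interpret fam Ops "\<lambda>p q. tmpl \<psi> p q q" "\<lambda>p q. tmpl \<psi> (Var 0) p q"
    "\<lambda>V a b. s00 a b b" "\<lambda>V a b. s00 (V 0) a b" "card (subforms \<psi>)" "card (subforms \<psi>) + 1"
  proof
    show "\<And>p q. in_PL Ops p \<Longrightarrow> in_PL Ops q \<Longrightarrow> in_PL Ops (tmpl \<psi> p q q)" using tp(1) by simp
    show "\<And>p q. in_PL Ops p \<Longrightarrow> in_PL Ops q \<Longrightarrow> in_PL Ops (tmpl \<psi> (Var 0) p q)" using tp(1) by simp
    show "\<And>V p q. eval V (tmpl \<psi> p q q) = s00 (eval V p) (eval V q) (eval V q)" using tp(2) by simp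
    show "\<And>V p q. eval V (tmpl \<psi> (Var 0) p q) = s00 (V 0) (eval V p) (eval V q)" using tp(2) by simp
    show "\<And>p q. card (subforms (tmpl \<psi> p q q)) \<le> card (subforms \<psi>) + card (subforms p \<union> subforms q)"
    proof -
      fix p q
      show "card (subforms (tmpl \<psi> p q q)) \<le> card (subforms \<psi>) + card (subforms p \<union> subforms q)"
        using tp(3)[of p q q] by (simp add: Un_absorb)
    qed
    show "\<And>p q. card (subforms (tmpl \<psi> (Var 0) p q)) \<le> card (subforms \<psi>) + 1 + card (subforms p \<union> subforms q)"
    proof -
      fix p q
      show "card (subforms (tmpl \<psi> (Var 0) p q)) \<le> card (subforms \<psi>) + 1 + card (subforms p \<union> subforms q)"
        using tp(3)[of "Var 0" p q] card_var_un[of 0 "subforms p" "subforms q"] by linarith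
    qed
    show "\<And>V. ((\<forall>a b. s00 a b b = (a \<and> b)) \<and> ((\<forall>a b. s00 (V 0) a b = (a \<or> b)) \<or> (\<forall>a b. s00 (V 0) a b = (a \<and> b)) \<or> (\<forall>a b. \<not> s00 (V 0) a b)))
       \<or> ((\<forall>a b. s00 a b b = (a \<or> b)) \<and> ((\<forall>a b. s00 (V 0) a b = (a \<and> b)) \<or> (\<forall>a b. s00 (V 0) a b = (a \<or> b)) \<or> (\<forall>a b. s00 (V 0) a b)))"
      by (case_tac "V 0") (simp_all add: s00_def all_bool_eq)
    show "(\<exists>c0 c1. \<forall>V. V 0 = c0 \<longrightarrow> V 1 = c1 \<longrightarrow> (\<forall>a b. s00 a b b = (a \<and> b)) \<and> (\<forall>a b. s00 (V 0) a b = (a \<or> b)))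
       \<or> (\<exists>c0 c1. \<forall>V. V 0 = c0 \<longrightarrow> V 1 = c1 \<longrightarrow> (\<forall>a b. s00 a b b = (a \<or> b)) \<and> (\<forall>a b. s00 (V 0) a b = (a \<and> b)))"
      by (rule disjI2, rule exI[of _ False], rule exI[of _ False]) (simp add: s00_def all_bool_eq)
  qed
  show ?thesis by (rule no_poly)
qed


lemma not_le_witness: "\<not> Ops \<preceq>\<^sub>c X \<Longrightarrow> \<exists>f\<in>Ops. f \<notin> clone X"
proof (rule ccontr)
  assume a: "\<not> Ops \<preceq>\<^sub>c X" "\<not> (\<exists>f\<in>Ops. f \<notin> clone X)"
  hence "\<forall>f\<in>Ops. f \<in> clone X" by simp
  hence "clone Ops \<subseteq> clone X" using clone_sub by blast
  thus False using a(1) unfolding clone_le_def by simp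
qed

definition Fof :: "bfun \<Rightarrow> (nat \<Rightarrow> bool) \<Rightarrow> bool" where
  "Fof f = (\<lambda>V. snd f (map V [0..<fst f]))"

lemma defbl_Fof: "f \<in> Ops \<Longrightarrow> defbl Ops (Fof f)"
  unfolding defbl_def Fof_def
  by (intro exI[of _ "App f (map Var [0..<fst f])"]) (simp add: o_def)

lemma Fof_list: "length xs = fst f \<Longrightarrow> Fof f (\<lambda>i. xs ! i) = snd f xs"
  unfolding Fof_def by (metis map_nth_upt)

lemma map2_nth_eq: "length xs = n \<Longrightarrow> length ys = n \<Longrightarrow>
   map (\<lambda>v. xs ! v \<and> ys ! v) [0..<n] = map2 (\<and>) xs ys"
  by (simp add: list_eq_iff_nth_eq)
lemma map2_nth_eq': "length xs = n \<Longrightarrow> length ys = n \<Longrightarrow>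
   map (\<lambda>v. xs ! v \<or> ys ! v) [0..<n] = map2 (\<or>) xs ys"
  by (simp add: list_eq_iff_nth_eq)

lemma wit_and: "\<not> landp f \<Longrightarrow> \<not> andpres (Fof f)"
proof
  assume nl: "\<not> landp f" and ap: "andpres (Fof f)"
  then obtain xs ys where l: "length xs = fst f" "length ys = fst f"
    and ne: "snd f (map2 (\<and>) xs ys) \<noteq> (snd f xs \<and> snd f ys)" unfolding landp_def by blast
  have "Fof f (\<lambda>v. xs ! v \<and> ys ! v) = (Fof f (\<lambda>i. xs ! i) \<and> Fof f (\<lambda>i. ys ! i))"
    using ap unfolding andpres_def by (erule_tac x="\<lambda>i. xs ! i" in allE, erule_tac x="\<lambda>i. ys ! i" in allE) simp
  moreover have "Fof f (\<lambda>v. xs ! v \<and> ys ! v) = snd f (map2 (\<and>) xs ys)"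
    unfolding Fof_def using map2_nth_eq[OF l] by simp
  ultimately show False using ne Fof_list[OF l(1)] Fof_list[OF l(2)] by simp
qed

lemma wit_or: "\<not> lorp f \<Longrightarrow> \<not> orpres (Fof f)"
proof
  assume nl: "\<not> lorp f" and ap: "orpres (Fof f)"
  then obtain xs ys where l: "length xs = fst f" "length ys = fst f"
    and ne: "snd f (map2 (\<or>) xs ys) \<noteq> (snd f xs \<or> snd f ys)" unfolding lorp_def by blast
  have "Fof f (\<lambda>v. xs ! v \<or> ys ! v) = (Fof f (\<lambda>i. xs ! i) \<or> Fof f (\<lambda>i. ys ! i))"
    using ap unfolding orpres_def by (erule_tac x="\<lambda>i. xs ! i" in allE, erule_tac x="\<lambda>i. ys ! i" in allE) simp
  moreover have "Fof f (\<lambda>v. xs ! v \<or> ys ! v) = snd f (map2 (\<or>) xs ys)"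
    unfolding Fof_def using map2_nth_eq'[OF l] by simp
  ultimately show False using ne Fof_list[OF l(1)] Fof_list[OF l(2)] by simp
qed

lemma wit_eu: "\<not> leu f \<Longrightarrow> \<not> eu (Fof f)"
proof
  assume nl: "\<not> leu f" and e: "eu (Fof f)"
  from e show False unfolding eu_def
  proof (elim disjE exE)
    fix c assume c: "\<forall>V. Fof f V = c"
    have "\<forall>xs. length xs = fst f \<longrightarrow> snd f xs = c" using c Fof_list by metis
    thus False using nl unfolding leu_def by blast
  next
    fix x b assume xb: "\<forall>V. Fof f V = (V x = b)"
    show False
    proof (cases "x < fst f")
      case True
      have "\<forall>xs. length xs = fst f \<longrightarrow> snd f xs = (xs ! x = b)" using xb Fof_list by metis
      thus False using nl True unfolding leu_def by blast
    next
      case False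
      have "map (\<lambda>_. b) [0..<fst f] = map ((\<lambda>_. b)(x := \<not> b)) [0..<fst f]" using False by simp
      hence "Fof f (\<lambda>_. b) = Fof f ((\<lambda>_. b)(x := \<not> b))" unfolding Fof_def by (rule arg_cong[where f="snd f"])
      thus False using xb by simp
    qed
  qed
qed

theorem theorem3p20:
  fixes Ops :: "bfun set"
  assumes "\<forall>g\<in>Ops. bfun_wf g"
  shows "(Ops \<preceq>\<^sub>c {band, btop, bbot} \<or> Ops \<preceq>\<^sub>c {bor, btop, bbot} \<or> Ops \<preceq>\<^sub>c {bneg, bbot}
            \<longrightarrow> (\<forall>\<phi>. in_PL Ops \<phi> \<longrightarrow>
                  (\<exists>E. finite E \<and> card E \<le> dag_size \<phi> + 1 \<and> uniquely_characterizes Ops E \<phi>)))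
       \<and> (\<not> (Ops \<preceq>\<^sub>c {band, btop, bbot} \<or> Ops \<preceq>\<^sub>c {bor, btop, bbot} \<or> Ops \<preceq>\<^sub>c {bneg, bbot})
            \<longrightarrow> \<not> (\<exists>p :: real poly. \<forall>\<phi>. in_PL Ops \<phi> \<longrightarrow>
                  (\<exists>E. finite E \<and> real (card E) \<le> poly p (real (dag_size \<phi>))
                       \<and> uniquely_characterizes Ops E \<phi>)))"
proof (intro conjI impI allI)
  fix \<phi> assume h: "Ops \<preceq>\<^sub>c {band, btop, bbot} \<or> Ops \<preceq>\<^sub>c {bor, btop, bbot} \<or> Ops \<preceq>\<^sub>c {bneg, bbot}"
    and \<phi>: "in_PL Ops \<phi>"
  from h show "\<exists>E. finite E \<and> card E \<le> dag_size \<phi> + 1 \<and> uniquely_characterizes Ops E \<phi>"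
  proof (elim disjE)
    assume "Ops \<preceq>\<^sub>c {band, btop, bbot}" thus ?thesis using pos_E \<phi> by blast
  next
    assume "Ops \<preceq>\<^sub>c {bor, btop, bbot}" thus ?thesis using pos_V \<phi> by blast
  next
    assume "Ops \<preceq>\<^sub>c {bneg, bbot}" thus ?thesis using pos_N \<phi> by blast
  qed
next
  assume h: "\<not> (Ops \<preceq>\<^sub>c {band, btop, bbot} \<or> Ops \<preceq>\<^sub>c {bor, btop, bbot} \<or> Ops \<preceq>\<^sub>c {bneg, bbot})"
  obtain f1 where f1: "f1 \<in> Ops" "f1 \<notin> clone {band, btop, bbot}" using not_le_witness h by blast
  obtain f2 where f2: "f2 \<in> Ops" "f2 \<notin> clone {bor, btop, bbot}" using not_le_witness h by blast
  obtain f3 where f3: "f3 \<in> Ops" "f3 \<notin> clone {bneg, bbot}" using not_le_witness h by blast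
  have "\<not> landp f1" using E_complete f1 assms by blast
  hence d1: "defbl Ops (Fof f1)" "\<not> andpres (Fof f1)" using defbl_Fof[OF f1(1)] wit_and by auto
  have "\<not> lorp f2" using V_complete f2 assms by blast
  hence d2: "defbl Ops (Fof f2)" "\<not> orpres (Fof f2)" using defbl_Fof[OF f2(1)] wit_or by auto
  have "\<not> leu f3" using N_complete f3 assms by blast
  hence d3: "defbl Ops (Fof f3)" "\<not> eu (Fof f3)" using defbl_Fof[OF f3(1)] wit_eu by auto
  have "tgt Ops" by (rule classify[OF d1 d2 d3])
  thus "\<not> (\<exists>p :: real poly. \<forall>\<phi>. in_PL Ops \<phi> \<longrightarrow>
                  (\<exists>E. finite E \<and> real (card E) \<le> poly p (real (dag_size \<phi>))
                       \<and> uniquely_characterizes Ops E \<phi>))"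
    unfolding tgt_def
  proof (elim disjE)
    assume "defbl3 Ops maj3" thus ?thesis by (rule maj_lb)
  next
    assume "defbl3 Ops xor3" thus ?thesis by (rule xor_lb)
  next
    assume "defbl3 Ops s10" thus ?thesis by (rule s10_lb)
  next
    assume "defbl3 Ops s00" thus ?thesis by (rule s00_lb)
  qed
qed


end
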